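(* Let $\varepsilon>0$, $\kappa\ge\frac14$, $\Delta t>0$, $C_4=\frac{1}{1-e^{-2}}$, $\gamma^{(0)}=3C_4(1+\kappa)$, $\gamma_1^{(0)}=\frac32C_4(1+\kappa)$, $\gamma_3^{(0)}=\frac12C_4(1+\kappa)$, $\alpha_0=\ln\Big(\frac{\gamma^{(0)}+\frac12\kappa}{\gamma^{(0)}-\frac12\kappa}\Big)$, and suppose $A\ge(\gamma^{(0)}-\frac{\kappa}{4})^4\alpha_0^{-2}\varepsilon^{-2}$. Let $u^{-2},u^{-1},u^0$ be real periodic grid functions with equal means, and let $u^{n+1}$, $n\ge0$, be defined by $$u^{n+1}=e^{-\Delta tL_N}u^n-A\Delta t^3\phi_0(L_N)\Delta_N^2(u^{n+1}-u^n)-\Delta t\,\phi_0(L_N)f_N(u^n)-\Delta t\,\phi_1(L_N)\Big(\tfrac32f_N(u^n)-2f_N(u^{n-1})+\tfrac12f_N(u^{n-2})\Big)-\Delta t\,\phi_2(L_N)\Big(\tfrac12f_N(u^n)-f_N(u^{n-1})+\tfrac12f_N(u^{n-2})\Big).$$ Then for all $k\ge0$, $$E_N(u^k)\le E_N(u^0)+\gamma_1^{(0)}\|\nabla_N(u^0-u^{-1})\|_2^2+\gamma_3^{(0)}\|\nabla_N(u^{-1}-u^{-2})\|_2^2.$$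
   Context: Setting: $\Omega=(0,1)^2$, $N=2K+1$, $h=1/N$, grid $x_i=ih$, $y_j=jh$; periodic grid functions have discrete Fourier expansions $f_{i,j}=\sum_{k,\ell=-K}^{K}\hat f_{k,\ell}\exp(2\pi\mathrm{i}(kx_i+\ell y_j))$. Spectral operators act as Fourier multipliers: $\mathcal D_{Nx}$, $\mathcal D_{Ny}$ by $2\pi\mathrm{i}k$, $2\pi\mathrm{i}\ell$; $\nabla_N f=(\mathcal D_{Nx}f,\mathcal D_{Ny}f)$, $\nabla_N\cdot(f_1,f_2)=\mathcal D_{Nx}f_1+\mathcal D_{Ny}f_2$, $\Delta_N$ has multiplier $-\lambda_{k,\ell}$, $\lambda_{k,\ell}=(2k\pi)^2+(2\ell\pi)^2$. Inner product $\langle f,g\rangle=h^2\sum_{i,j}f_{i,j}g_{i,j}$, $\|f\|_2=\langle f,f\rangle^{1/2}$. $L_N=\varepsilon^2\Delta_N^2-\kappa\Delta_N$ with multiplier $\Lambda_{k,\ell}=\varepsilon^2\lambda_{k,\ell}^2+\kappa\lambda_{k,\ell}$; $e^{-\Delta tL_N}$ has multiplier $e^{-\Delta t\Lambda_{k,\ell}}$. With $g_0(x)=\frac{1-e^{-x}}{x}$, $g_1(x)=\frac{1-g_0(x)}{x}$, $g_2(x)=\frac{1-2g_1(x)}{x}$, the operators $\phi_j(L_N)$, $j=0,1,2$, are the multipliers $g_j(\Delta t\Lambda_{k,\ell})$ on nonzero modes (equivalently $\phi_0=(\Delta tL_N)^{-1}(I-e^{-\Delta tL_N})$, $\phi_1=(\Delta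 tL_N)^{-1}(I-\phi_0)$, $\phi_2=(\Delta tL_N)^{-1}(I-2\phi_1)$), applied to zero-mean grid functions. Nonlinearity (pointwise): $f_N(u)=\nabla_N\cdot\Big(\frac{\nabla_N u}{1+|\nabla_N u|^2}\Big)+\kappa\Delta_N u$. Discrete energy: $E_N(\phi)=h^2\sum_{i,j}\big(-\frac12\ln(1+|\nabla_N\phi|^2)_{i,j}\big)+\frac{\varepsilon^2}{2}\|\Delta_N\phi\|_2^2$. *)

theory Defs
  imports Complex_Main
begin

text \<open>Grid functions on the (2K+1) x (2K+1) periodic grid, x_i = i h, h = 1/N, N = 2K+1.
  Only the values at indices i, j < N are relevant.\<close>
type_synonym grid = "nat \<Rightarrow> nat \<Rightarrow> real"

definition gridN :: "nat \<Rightarrow> nat" where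
  "gridN K = 2 * K + 1"

definition gridh :: "nat \<Rightarrow> real" where
  "gridh K = 1 / real (gridN K)"

text \<open>Discrete Fourier coefficients: f_{i,j} = sum_{k,l=-K..K} fhat_{k,l} exp(2 pi i (k x_i + l y_j)).\<close>
definition dft :: "nat \<Rightarrow> grid \<Rightarrow> int \<Rightarrow> int \<Rightarrow> complex" where
  "dft K f k l = (1 / of_nat ((gridN K)\<^sup>2)) *
     (\<Sum>i<gridN K. \<Sum>j<gridN K. complex_of_real (f i j) *
        cis (- 2 * pi * (real_of_int k * real i + real_of_int l * real j) / real (gridN K)))"

text \<open>Fourier multiplier operator with symbol m (real part taken; for the symbols
  used here the result is real anyway).\<close>
definition fmult :: "nat \<Rightarrow> (int \<Rightarrow> int \<Rightarrow> complex) \<Rightarrow> grid \<Rightarrow> grid" where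
  "fmult K m f i j = Re (\<Sum>k\<in>{- int K..int K}. \<Sum>l\<in>{- int K..int K}.
      m k l * dft K f k l *
      cis (2 * pi * (real_of_int k * real i + real_of_int l * real j) / real (gridN K)))"

definition DNx :: "nat \<Rightarrow> grid \<Rightarrow> grid" where
  "DNx K = fmult K (\<lambda>k l. \<i> * complex_of_real (2 * pi * real_of_int k))"

definition DNy :: "nat \<Rightarrow> grid \<Rightarrow> grid" where
  "DNy K = fmult K (\<lambda>k l. \<i> * complex_of_real (2 * pi * real_of_int l))"

definition lam :: "int \<Rightarrow> int \<Rightarrow> real" where
  "lam k l = (2 * real_of_int k * pi)\<^sup>2 + (2 * real_of_int l * pi)\<^sup>2"

definition LapN :: "nat \<Rightarrow> grid \<Rightarrow> grid" where
  "LapN K = fmult K (\<lambda>k l. complex_of_real (- lam k l))"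

definition Lap2N :: "nat \<Rightarrow> grid \<Rightarrow> grid" where
  "Lap2N K = fmult K (\<lambda>k l. complex_of_real ((lam k l)\<^sup>2))"

text \<open>Symbol of L_N = eps^2 Delta_N^2 - kappa Delta_N\<close>
definition LamL :: "real \<Rightarrow> real \<Rightarrow> int \<Rightarrow> int \<Rightarrow> real" where
  "LamL eps kappa k l = eps\<^sup>2 * (lam k l)\<^sup>2 + kappa * lam k l"

definition expL :: "nat \<Rightarrow> real \<Rightarrow> real \<Rightarrow> real \<Rightarrow> grid \<Rightarrow> grid" where
  "expL K eps kappa dt = fmult K (\<lambda>k l. complex_of_real (exp (- dt * LamL eps kappa k l)))"

text \<open>g_0, g_1, g_2, continuously extended at 0 (the zero mode is irrelevant, since
  the phi_j are only applied to zero-mean grid functions).\<close>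
definition g0 :: "real \<Rightarrow> real" where
  "g0 x = (if x = 0 then 1 else (1 - exp (- x)) / x)"

definition g1 :: "real \<Rightarrow> real" where
  "g1 x = (if x = 0 then 1/2 else (1 - g0 x) / x)"

definition g2 :: "real \<Rightarrow> real" where
  "g2 x = (if x = 0 then 1/3 else (1 - 2 * g1 x) / x)"

definition phiL :: "(real \<Rightarrow> real) \<Rightarrow> nat \<Rightarrow> real \<Rightarrow> real \<Rightarrow> real \<Rightarrow> grid \<Rightarrow> grid" where
  "phiL g K eps kappa dt = fmult K (\<lambda>k l. complex_of_real (g (dt * LamL eps kappa k l)))"

definition gradsq :: "nat \<Rightarrow> grid \<Rightarrow> grid" where
  "gradsq K u i j = (DNx K u i j)\<^sup>2 + (DNy K u i j)\<^sup>2"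

definition fN :: "nat \<Rightarrow> real \<Rightarrow> grid \<Rightarrow> grid" where
  "fN K kappa u i j =
     DNx K (\<lambda>a b. DNx K u a b / (1 + gradsq K u a b)) i j
   + DNy K (\<lambda>a b. DNy K u a b / (1 + gradsq K u a b)) i j
   + kappa * LapN K u i j"

definition ip :: "nat \<Rightarrow> grid \<Rightarrow> grid \<Rightarrow> real" where
  "ip K f g = (gridh K)\<^sup>2 * (\<Sum>i<gridN K. \<Sum>j<gridN K. f i j * g i j)"

definition norm2sq :: "nat \<Rightarrow> grid \<Rightarrow> real" where
  "norm2sq K f = ip K f f"

definition gradnorm2sq :: "nat \<Rightarrow> grid \<Rightarrow> real" where
  "gradnorm2sq K f = norm2sq K (DNx K f) + norm2sq K (DNy K f)"

definition gmean :: "nat \<Rightarrow> grid \<Rightarrow> real" where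
  "gmean K f = (gridh K)\<^sup>2 * (\<Sum>i<gridN K. \<Sum>j<gridN K. f i j)"

definition EN :: "nat \<Rightarrow> real \<Rightarrow> grid \<Rightarrow> real" where
  "EN K eps \<phi> = (gridh K)\<^sup>2 * (\<Sum>i<gridN K. \<Sum>j<gridN K. - (1/2) * ln (1 + gradsq K \<phi> i j))
      + eps\<^sup>2 / 2 * norm2sq K (LapN K \<phi>)"

definition C4 :: real where "C4 = 1 / (1 - exp (- 2))"
definition gamma0 :: "real \<Rightarrow> real" where "gamma0 kappa = 3 * C4 * (1 + kappa)"
definition gamma10 :: "real \<Rightarrow> real" where "gamma10 kappa = 3/2 * C4 * (1 + kappa)"
definition gamma30 :: "real \<Rightarrow> real" where "gamma30 kappa = 1/2 * C4 * (1 + kappa)"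
definition alpha0 :: "real \<Rightarrow> real" where
  "alpha0 kappa = ln ((gamma0 kappa + kappa / 2) / (gamma0 kappa - kappa / 2))"

end

theory Submission
  imports Defs
begin


lemma gridN_pos: "0 < gridN K" by (simp add: gridN_def)

lemma cis_ne_1:
  fixes d :: int and N :: nat
  assumes N: "0 < N" and nd: "\<not> (int N dvd d)"
  shows "cis (2 * pi * real_of_int d / real N) \<noteq> 1"
proof
  assume h: "cis (2 * pi * real_of_int d / real N) = 1"
  hence "cos (2 * pi * real_of_int d / real N) = 1" by (metis cis.simps(1) one_complex.simps(1))
  then obtain n :: int where n: "2 * pi * real_of_int d / real N = real_of_int n * 2 * pi"
    by (auto simp: cos_one_2pi_int)
  hence "real_of_int d = real_of_int n * real N" using N by (simp add: field_simps)
  hence "d = n * int N" by (metis of_int_eq_iff of_int_mult of_int_of_nat_eq)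
  thus False using nd by simp
qed

lemma geo_sum_cis:
  fixes d :: int and N :: nat
  assumes N: "0 < N" and nd: "\<not> (int N dvd d)"
  shows "(\<Sum>x<N. cis (2 * pi * real_of_int d * real x / real N)) = 0"
proof -
  define z where "z = cis (2 * pi * real_of_int d / real N)"
  have z1: "z \<noteq> 1" using cis_ne_1[OF N nd] by (simp add: z_def)
  have zx: "cis (2 * pi * real_of_int d * real x / real N) = z ^ x" for x
    by (simp add: z_def DeMoivre field_simps)
  have zN: "z ^ N = 1"
  proof -
    have "z ^ N = cis (2 * pi * real_of_int d)" using N by (simp add: z_def DeMoivre field_simps)
    also have "\<dots> = 1" by (rule cis_multiple_2pi) simp
    finally show ?thesis .
  qed
  have "(\<Sum>x<N. cis (2 * pi * real_of_int d * real x / real N)) = (\<Sum>x<N. z ^ x)" by (simp add: zx)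
  also have "\<dots> = (z ^ N - 1) / (z - 1)" using z1 by (rule geometric_sum)
  also have "\<dots> = 0" using zN by simp
  finally show ?thesis .
qed

lemma small_dvd:
  fixes d :: int assumes "\<bar>d\<bar> < int N" "int N dvd d" shows "d = 0"
  using dvd_imp_le_int[of d "int N"] assms by (cases "d = 0") auto

lemma orth1:
  fixes K :: nat and k k' :: int
  assumes "k \<in> {- int K..int K}" "k' \<in> {- int K..int K}"
  shows "(\<Sum>i<gridN K. cis (2 * pi * real_of_int (k' - k) * real i / real (gridN K)))
         = (if k = k' then of_nat (gridN K) else 0)"
proof (cases "k = k'")
  case True thus ?thesis by simp
next
  case False
  have "\<bar>k' - k\<bar> < int (gridN K)" using assms by (auto simp: gridN_def)
  hence "\<not> int (gridN K) dvd (k' - k)" using small_dvd False by force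
  from geo_sum_cis[OF gridN_pos this] show ?thesis using False by simp
qed

lemma sum_Ix_reindex:
  "(\<Sum>k\<in>{- int K..int K}. f k) = (\<Sum>x<gridN K. f (int x - int K))"
proof -
  have "(\<Sum>x<gridN K. f (int x - int K)) = (\<Sum>k\<in>(\<lambda>x. int x - int K) ` {..<gridN K}. f k)"
    by (rule sum.reindex[symmetric, unfolded comp_def]) (auto simp: inj_on_def)
  also have "(\<lambda>x. int x - int K) ` {..<gridN K} = {- int K..int K}"
  proof (rule set_eqI, rule iffI)
    fix k assume "k \<in> {- int K..int K}"
    hence "nat (k + int K) < gridN K" "k = int (nat (k + int K)) - int K" by (auto simp: gridN_def)
    thus "k \<in> (\<lambda>x. int x - int K) ` {..<gridN K}" by blast
  qed (auto simp: gridN_def)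
  finally show ?thesis by simp
qed

lemma orth2:
  fixes K :: nat and i i' :: nat
  assumes "i < gridN K" "i' < gridN K"
  shows "(\<Sum>k\<in>{- int K..int K}. cis (2 * pi * real_of_int k * (real i - real i') / real (gridN K)))
         = (if i = i' then of_nat (gridN K) else 0)"
proof (cases "i = i'")
  case True
  have "card {- int K..int K} = gridN K" by (simp add: gridN_def)
  thus ?thesis using True by simp
next
  case False
  define d where "d = int i - int i'"
  have "\<bar>d\<bar> < int (gridN K)" using assms by (auto simp: d_def)
  moreover have "d \<noteq> 0" using False by (simp add: d_def)
  ultimately have nd: "\<not> int (gridN K) dvd d" using small_dvd by blast
  have "(\<Sum>k\<in>{- int K..int K}. cis (2 * pi * real_of_int k * (real i - real i') / real (gridN K)))
      = (\<Sum>x<gridN K. cis (2 * pi * real_of_int (int x - int K) * real_of_int d / real (gridN K)))"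
    by (simp add: sum_Ix_reindex d_def)
  also have "\<dots> = (\<Sum>x<gridN K. cis (- 2 * pi * real K * real_of_int d / real (gridN K)) *
                      cis (2 * pi * real_of_int d * real x / real (gridN K)))"
    by (rule sum.cong) (simp_all add: cis_mult field_simps)
  also have "\<dots> = cis (- 2 * pi * real K * real_of_int d / real (gridN K)) *
                      (\<Sum>x<gridN K. cis (2 * pi * real_of_int d * real x / real (gridN K)))"
    by (simp add: sum_distrib_left)
  also have "\<dots> = 0" using geo_sum_cis[OF gridN_pos nd] by simp
  finally show ?thesis using False by simp
qed


lemma sum4_swap:
  "(\<Sum>k\<in>A. \<Sum>l\<in>B. \<Sum>i\<in>C. \<Sum>j\<in>D. F k l i j) = (\<Sum>i\<in>C. \<Sum>j\<in>D. \<Sum>k\<in>A. \<Sum>l\<in>B. F k l i j)"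
proof -
  have "(\<Sum>k\<in>A. \<Sum>l\<in>B. \<Sum>i\<in>C. \<Sum>j\<in>D. F k l i j) = (\<Sum>k\<in>A. \<Sum>i\<in>C. \<Sum>j\<in>D. \<Sum>l\<in>B. F k l i j)"
  proof (rule sum.cong[OF refl])
    fix k
    have "(\<Sum>l\<in>B. \<Sum>i\<in>C. \<Sum>j\<in>D. F k l i j) = (\<Sum>i\<in>C. \<Sum>l\<in>B. \<Sum>j\<in>D. F k l i j)" by (rule sum.swap)
    also have "\<dots> = (\<Sum>i\<in>C. \<Sum>j\<in>D. \<Sum>l\<in>B. F k l i j)" by (rule sum.cong[OF refl], rule sum.swap)
    finally show "(\<Sum>l\<in>B. \<Sum>i\<in>C. \<Sum>j\<in>D. F k l i j) = (\<Sum>i\<in>C. \<Sum>j\<in>D. \<Sum>l\<in>B. F k l i j)" .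
  qed
  also have "\<dots> = (\<Sum>i\<in>C. \<Sum>k\<in>A. \<Sum>j\<in>D. \<Sum>l\<in>B. F k l i j)" by (rule sum.swap)
  also have "\<dots> = (\<Sum>i\<in>C. \<Sum>j\<in>D. \<Sum>k\<in>A. \<Sum>l\<in>B. F k l i j)" by (rule sum.cong[OF refl], rule sum.swap)
  finally show ?thesis .
qed

lemma sum_prod_helper:
  fixes c :: "'a::comm_semiring_1"
  shows "(\<Sum>k\<in>I. \<Sum>l\<in>J. c * (a k * b l)) = c * ((\<Sum>k\<in>I. a k) * (\<Sum>l\<in>J. b l))"
  by (simp add: sum_distrib_left sum_distrib_right mult.assoc) (rule sum.swap)

abbreviation NN :: "nat \<Rightarrow> real" where "NN K \<equiv> real (gridN K)"

lemma NN_pos: "0 < NN K" using gridN_pos by simp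
lemma NN_nz [simp]: "NN K \<noteq> 0" using gridN_pos by simp

definition chr :: "nat \<Rightarrow> int \<Rightarrow> int \<Rightarrow> nat \<Rightarrow> nat \<Rightarrow> complex" where
  "chr K k l i j = cis (2 * pi * (real_of_int k * real i + real_of_int l * real j) / NN K)"

lemma dft_alt: "dft K f k l = (1 / of_nat ((gridN K)\<^sup>2)) *
     (\<Sum>i<gridN K. \<Sum>j<gridN K. complex_of_real (f i j) * cnj (chr K k l i j))"
  unfolding dft_def chr_def by (simp add: cis_cnj)

lemma fmult_alt: "fmult K m f i j = Re (\<Sum>k\<in>{- int K..int K}. \<Sum>l\<in>{- int K..int K}.
      m k l * dft K f k l * chr K k l i j)"
  unfolding fmult_def chr_def by simp

lemma chr_neg: "cnj (chr K (- k) (- l) i j) = chr K k l i j"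
proof -
  have "- (2 * pi * (real_of_int (- k) * real i + real_of_int (- l) * real j) / NN K)
      = 2 * pi * (real_of_int k * real i + real_of_int l * real j) / NN K" by (simp add: divide_simps) (simp add: algebra_simps)
  thus ?thesis unfolding chr_def by (simp only: cis_cnj)
qed

lemma dft_conj: "dft K f (- k) (- l) = cnj (dft K f k l)"
  unfolding dft_alt by (simp add: chr_neg)

lemma inversion:
  assumes i: "i < gridN K" and j: "j < gridN K"
  shows "(\<Sum>k\<in>{- int K..int K}. \<Sum>l\<in>{- int K..int K}. dft K f k l * chr K k l i j) = complex_of_real (f i j)"
proof -
  let ?N = "gridN K"
  let ?I = "{- int K..int K}"
  define A where "A = (\<lambda>k i'. cis (2 * pi * real_of_int k * (real i - real i') / NN K))"
  define B where "B = (\<lambda>l j'. cis (2 * pi * real_of_int l * (real j - real j') / NN K))"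
  have trm: "cnj (chr K k l i' j') * chr K k l i j = A k i' * B l j'" for k l i' j'
    unfolding chr_def A_def B_def by (simp add: cis_cnj cis_mult diff_divide_distrib add_divide_distrib algebra_simps)
  have "(\<Sum>k\<in>?I. \<Sum>l\<in>?I. dft K f k l * chr K k l i j)
      = (\<Sum>k\<in>?I. \<Sum>l\<in>?I. \<Sum>i'<?N. \<Sum>j'<?N. (1 / of_nat (?N\<^sup>2)) * complex_of_real (f i' j') * (A k i' * B l j'))"
    unfolding dft_alt by (simp add: sum_distrib_left sum_distrib_right) (intro sum.cong refl, simp add: mult.assoc trm[symmetric])
  also have "\<dots> = (\<Sum>i'<?N. \<Sum>j'<?N. \<Sum>k\<in>?I. \<Sum>l\<in>?I. (1 / of_nat (?N\<^sup>2)) * complex_of_real (f i' j') * (A k i' * B l j'))"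
    by (rule sum4_swap)
  also have "\<dots> = (\<Sum>i'<?N. \<Sum>j'<?N. (1 / of_nat (?N\<^sup>2)) * complex_of_real (f i' j') * ((\<Sum>k\<in>?I. A k i') * (\<Sum>l\<in>?I. B l j')))"
    by (intro sum.cong refl) (rule sum_prod_helper)
  also have "\<dots> = (\<Sum>i'<?N. \<Sum>j'<?N. (1 / of_nat (?N\<^sup>2)) * complex_of_real (f i' j') *
        ((if i = i' then of_nat ?N else 0) * (if j = j' then of_nat ?N else 0)))"
    by (intro sum.cong refl) (simp add: A_def B_def orth2 i j)
  also have "\<dots> = (\<Sum>i'<?N. \<Sum>j'<?N. if i = i' then (if j = j' then complex_of_real (f i' j') else 0) else 0)"
  proof (intro sum.cong refl)
    fix i' j'
    have nz: "(of_nat ?N :: complex) \<noteq> 0" using gridN_pos[of K] by simp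
    show "(1 / of_nat (?N\<^sup>2)) * complex_of_real (f i' j') *
        ((if i = i' then of_nat ?N else 0) * (if j = j' then of_nat ?N else 0))
        = (if i = i' then (if j = j' then complex_of_real (f i' j') else 0) else 0)"
      using nz by (simp add: power2_eq_square)
  qed
  also have "\<dots> = (\<Sum>i'<?N. if i = i' then (\<Sum>j'<?N. if j = j' then complex_of_real (f i' j') else 0) else 0)"
    by (intro sum.cong refl) auto
  also have "\<dots> = complex_of_real (f i j)" using i j by (simp add: sum.delta')
  finally show ?thesis .
qed


definition herm :: "(int \<Rightarrow> int \<Rightarrow> complex) \<Rightarrow> bool" where
  "herm m \<longleftrightarrow> (\<forall>k l. m (- k) (- l) = cnj (m k l))"

lemma sum_neg_reindex: "(\<Sum>k\<in>{- a..a::int}. g (- k)) = (\<Sum>k\<in>{- a..a}. g k)"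
  by (rule sum.reindex_bij_witness[of _ uminus uminus]) auto

lemma sum_neg_reindex2:
  "(\<Sum>k\<in>{- a..a::int}. \<Sum>l\<in>{- a..a}. g (- k) (- l)) = (\<Sum>k\<in>{- a..a}. \<Sum>l\<in>{- a..a}. g k l)"
proof -
  have "(\<Sum>k\<in>{- a..a::int}. \<Sum>l\<in>{- a..a}. g (- k) (- l)) = (\<Sum>k\<in>{- a..a::int}. \<Sum>l\<in>{- a..a}. g k (- l))"
    using sum_neg_reindex[of "\<lambda>k. \<Sum>l\<in>{- a..a}. g k (- l)" a] by simp
  also have "\<dots> = (\<Sum>k\<in>{- a..a}. \<Sum>l\<in>{- a..a}. g k l)"
    by (rule sum.cong[OF refl]) (rule sum_neg_reindex)
  finally show ?thesis .
qed

lemma chr_cnj: "cnj (chr K k l i j) = chr K (- k) (- l) i j"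
  using chr_neg[of K "- k" "- l" i j] by simp

lemma fmult_complex:
  assumes h: "herm m"
  shows "complex_of_real (fmult K m f i j) =
    (\<Sum>k\<in>{- int K..int K}. \<Sum>l\<in>{- int K..int K}. m k l * dft K f k l * chr K k l i j)"
proof -
  define S where "S = (\<Sum>k\<in>{- int K..int K}. \<Sum>l\<in>{- int K..int K}. m k l * dft K f k l * chr K k l i j)"
  have "cnj S = (\<Sum>k\<in>{- int K..int K}. \<Sum>l\<in>{- int K..int K}. m (- k) (- l) * dft K f (- k) (- l) * chr K (- k) (- l) i j)"
    unfolding S_def using h by (simp add: herm_def dft_conj chr_cnj)
  also have "\<dots> = S" unfolding S_def
    using sum_neg_reindex2[of "\<lambda>k l. m k l * dft K f k l * chr K k l i j" "int K"] by simp
  finally have c: "cnj S = S" .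
  hence "Im (cnj S) = Im S" by simp
  hence "Im S = 0" by simp
  hence "complex_of_real (Re S) = S" by (simp add: complex_eq_iff)
  thus ?thesis unfolding fmult_alt S_def by simp
qed

lemma dft_fmult:
  assumes h: "herm m" and k: "k \<in> {- int K..int K}" and l: "l \<in> {- int K..int K}"
  shows "dft K (fmult K m f) k l = m k l * dft K f k l"
proof -
  let ?N = "gridN K"
  let ?I = "{- int K..int K}"
  define P where "P = (\<lambda>k' i. cis (2 * pi * real_of_int (k' - k) * real i / NN K))"
  define Q where "Q = (\<lambda>l' j. cis (2 * pi * real_of_int (l' - l) * real j / NN K))"
  have trm: "chr K k' l' i j * cnj (chr K k l i j) = P k' i * Q l' j" for k' l' i j
    unfolding chr_def P_def Q_def
    by (simp add: cis_cnj cis_mult diff_divide_distrib add_divide_distrib algebra_simps)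
  have "dft K (fmult K m f) k l = (\<Sum>i<?N. \<Sum>j<?N. \<Sum>k'\<in>?I. \<Sum>l'\<in>?I.
        (1 / of_nat (?N\<^sup>2)) * (m k' l' * dft K f k' l') * (P k' i * Q l' j))"
    unfolding dft_alt fmult_complex[OF h]
    by (simp add: sum_distrib_left sum_distrib_right) (intro sum.cong refl, simp add: mult.assoc trm[symmetric])
  also have "\<dots> = (\<Sum>k'\<in>?I. \<Sum>l'\<in>?I. \<Sum>i<?N. \<Sum>j<?N.
        (1 / of_nat (?N\<^sup>2)) * (m k' l' * dft K f k' l') * (P k' i * Q l' j))"
    by (rule sum4_swap[symmetric])
  also have "\<dots> = (\<Sum>k'\<in>?I. \<Sum>l'\<in>?I.
        (1 / of_nat (?N\<^sup>2)) * (m k' l' * dft K f k' l') * ((\<Sum>i<?N. P k' i) * (\<Sum>j<?N. Q l' j)))"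
    by (intro sum.cong refl) (rule sum_prod_helper)
  also have "\<dots> = (\<Sum>k'\<in>?I. \<Sum>l'\<in>?I. if k = k' then (if l = l' then m k' l' * dft K f k' l' else 0) else 0)"
  proof (intro sum.cong refl)
    fix k' l' assume k': "k' \<in> ?I" and l': "l' \<in> ?I"
    have nz: "(of_nat ?N :: complex) \<noteq> 0" using gridN_pos[of K] by simp
    show "(1 / of_nat (?N\<^sup>2)) * (m k' l' * dft K f k' l') * ((\<Sum>i<?N. P k' i) * (\<Sum>j<?N. Q l' j))
      = (if k = k' then (if l = l' then m k' l' * dft K f k' l' else 0) else 0)"
      unfolding P_def Q_def using orth1[OF k k'] orth1[OF l l'] nz by (simp add: power2_eq_square)
  qed
  also have "\<dots> = (\<Sum>k'\<in>?I. if k = k' then (\<Sum>l'\<in>?I. if l = l' then m k' l' * dft K f k' l' else 0) else 0)"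
    by (intro sum.cong refl) auto
  also have "\<dots> = m k l * dft K f k l" using k l by (simp add: sum.delta')
  finally show ?thesis .
qed

lemma gridh_sq: "(gridh K)\<^sup>2 = 1 / NN K ^ 2" by (simp add: gridh_def power_divide)

lemma parseval:
  "complex_of_real (ip K f g) =
     (\<Sum>k\<in>{- int K..int K}. \<Sum>l\<in>{- int K..int K}. dft K f k l * cnj (dft K g k l))"
proof -
  let ?N = "gridN K"
  let ?I = "{- int K..int K}"
  have cg: "cnj (dft K g k l) = (1 / of_nat (?N\<^sup>2)) * (\<Sum>i<?N. \<Sum>j<?N. complex_of_real (g i j) * chr K k l i j)" for k l
    unfolding dft_alt by simp
  have "complex_of_real (ip K f g) = (1 / of_nat (?N\<^sup>2)) * (\<Sum>i<?N. \<Sum>j<?N. complex_of_real (f i j) * complex_of_real (g i j))"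
    unfolding ip_def gridh_sq by simp
  also have "\<dots> = (1 / of_nat (?N\<^sup>2)) * (\<Sum>i<?N. \<Sum>j<?N. (\<Sum>k\<in>?I. \<Sum>l\<in>?I. dft K f k l * chr K k l i j) * complex_of_real (g i j))"
    by (simp add: inversion)
  also have "\<dots> = (\<Sum>i<?N. \<Sum>j<?N. \<Sum>k\<in>?I. \<Sum>l\<in>?I. dft K f k l * ((1 / of_nat (?N\<^sup>2)) * (complex_of_real (g i j) * chr K k l i j)))"
    by (simp add: sum_distrib_left sum_distrib_right algebra_simps)
  also have "\<dots> = (\<Sum>k\<in>?I. \<Sum>l\<in>?I. \<Sum>i<?N. \<Sum>j<?N. dft K f k l * ((1 / of_nat (?N\<^sup>2)) * (complex_of_real (g i j) * chr K k l i j)))"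
    by (rule sum4_swap[symmetric])
  also have "\<dots> = (\<Sum>k\<in>?I. \<Sum>l\<in>?I. dft K f k l * cnj (dft K g k l))"
    unfolding cg by (simp add: sum_distrib_left)
  finally show ?thesis .
qed

lemma ip_fourier: "ip K f g = Re (\<Sum>k\<in>{- int K..int K}. \<Sum>l\<in>{- int K..int K}. dft K f k l * cnj (dft K g k l))"
  using parseval[of K f g] by (metis Re_complex_of_real)


lemma mono_from_deriv0:
  fixes h h' :: "real \<Rightarrow> real"
  assumes "\<And>t. (h has_real_derivative h' t) (at t)" "\<And>t. 0 \<le> t \<Longrightarrow> 0 \<le> h' t" "0 \<le> x"
  shows "h 0 \<le> h x"
  using deriv_nonneg_imp_mono[of 0 x h h'] assms by auto

lemma expB: fixes x :: real assumes "0 \<le> x" shows "2 - x \<le> (2 + x) * exp (- x)"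
proof -
  let ?h = "\<lambda>t::real. (2 + t) * exp (- t) - 2 + t"
  have "?h 0 \<le> ?h x"
  proof (rule mono_from_deriv0[where h' = "\<lambda>t. 1 - (1 + t) * exp (- t)"])
    fix t :: real
    show "(?h has_real_derivative 1 - (1 + t) * exp (- t)) (at t)"
      by (auto intro!: derivative_eq_intros simp: algebra_simps)
    assume "0 \<le> t"
    have "1 + t \<le> exp t" by (rule exp_ge_add_one_self)
    hence "(1 + t) * exp (- t) \<le> exp t * exp (- t)" by (intro mult_right_mono) auto
    also have "\<dots> = 1" by (simp add: exp_minus)
    finally show "0 \<le> 1 - (1 + t) * exp (- t)" by simp
  qed (use assms in auto)
  thus ?thesis by simp
qed

lemma expQ: fixes x :: real assumes "0 \<le> x" shows "exp (- x) \<le> 1 - x + x\<^sup>2 / 2"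
proof -
  let ?h = "\<lambda>t::real. 1 - t + t\<^sup>2 / 2 - exp (- t)"
  have "?h 0 \<le> ?h x"
  proof (rule mono_from_deriv0[where h' = "\<lambda>t. - 1 + t + exp (- t)"])
    fix t :: real
    show "(?h has_real_derivative - 1 + t + exp (- t)) (at t)"
      by (auto intro!: derivative_eq_intros simp: algebra_simps power2_eq_square)
    show "0 \<le> - 1 + t + exp (- t)" using exp_ge_add_one_self[of "-t"] by simp
  qed (use assms in auto)
  thus ?thesis by simp
qed

lemma expG2: fixes x :: real assumes "0 \<le> x" shows "x\<^sup>2 - 2 \<le> (2 * x - 2) * exp x"
proof -
  let ?h = "\<lambda>t::real. (2 * t - 2) * exp t - t\<^sup>2 + 2"
  have "?h 0 \<le> ?h x"
  proof (rule mono_from_deriv0[where h' = "\<lambda>t. 2 * t * (exp t - 1)"])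
    fix t :: real
    show "(?h has_real_derivative 2 * t * (exp t - 1)) (at t)"
      by (auto intro!: derivative_eq_intros simp: algebra_simps power2_eq_square)
    assume "0 \<le> t"
    moreover have "1 \<le> exp t" using \<open>0 \<le> t\<close> by simp
    ultimately show "0 \<le> 2 * t * (exp t - 1)" by simp
  qed (use assms in auto)
  thus ?thesis by simp
qed

lemma g0_pos: "0 \<le> x \<Longrightarrow> 0 < g0 x"
proof -
  assume x: "0 \<le> x"
  show ?thesis
  proof (cases "x = 0")
    case False
    hence "exp (- x) < 1" using x by simp
    thus ?thesis using x False by (simp add: g0_def)
  qed (simp add: g0_def)
qed

lemma exp_g0: "exp (- x) = 1 - x * g0 x"
  by (cases "x = 0") (auto simp: g0_def)

lemma g1_facts: assumes "0 \<le> x" shows "0 \<le> g1 x" "g1 x \<le> g0 x" "g1 x \<le> 1/2"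
proof -
  have all: "0 \<le> g1 x \<and> g1 x \<le> g0 x \<and> g1 x \<le> 1/2"
  proof (cases "x = 0")
    case True thus ?thesis by (simp add: g0_def g1_def)
  next
    case False
    hence x: "0 < x" using assms by simp
    let ?e = "exp (- x)"
    have g0: "g0 x = (1 - ?e) / x" using False by (simp add: g0_def)
    have g1: "g1 x = (1 - (1 - ?e) / x) / x" using False by (simp add: g1_def g0_def)
    have e1: "1 - x \<le> ?e" using exp_ge_add_one_self[of "-x"] by simp
    have e2: "(1 + x) * ?e \<le> 1"
    proof -
      have "(1 + x) * ?e \<le> exp x * ?e" by (intro mult_right_mono) (auto simp: exp_ge_add_one_self)
      thus ?thesis by (simp add: exp_minus)
    qed
    have e3: "?e \<le> 1 - x + x\<^sup>2/2" using expQ assms by simp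
    have "0 \<le> 1 - (1 - ?e) / x" using e1 x by (simp add: field_simps)
    hence a: "0 \<le> g1 x" using g1 x by simp
    have "x * ((1 + x) * ?e) \<le> x * 1" using e2 x by (intro mult_left_mono) auto
    hence e2': "x * ?e + x * (x * ?e) \<le> x" by (simp add: algebra_simps)
    have "(1 - (1 - ?e) / x) / x \<le> (1 - ?e) / x"
      using x e2' by (simp add: field_simps algebra_simps)
    hence b: "g1 x \<le> g0 x" using g0 g1 by simp
    have "(1 - (1 - ?e) / x) / x \<le> 1/2"
      using x e3 by (simp add: field_simps power2_eq_square algebra_simps)
    thus ?thesis using a b g1 by simp
  qed
  thus "0 \<le> g1 x" "g1 x \<le> g0 x" "g1 x \<le> 1/2" by auto
qed

lemma g2_facts: assumes "0 \<le> x" shows "0 \<le> g2 x" "g2 x \<le> g0 x"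
proof -
  have all: "0 \<le> g2 x \<and> g2 x \<le> g0 x"
  proof (cases "x = 0")
    case True thus ?thesis by (simp add: g0_def g2_def)
  next
    case False
    hence x: "0 < x" using assms by simp
    let ?e = "exp (- x)"
    have g0: "g0 x = (1 - ?e) / x" using False by (simp add: g0_def)
    have g1: "g1 x = (1 - (1 - ?e) / x) / x" using False by (simp add: g1_def g0_def)
    have g2: "g2 x = (1 - 2 * g1 x) / x" using False by (simp add: g2_def)
    have a: "0 \<le> g2 x" using g1_facts(3)[OF assms] x g2 by simp
    have h: "x\<^sup>2 - 2 \<le> (2 * x - 2) * exp x" by (rule expG2) (use assms in simp)
    have "(x\<^sup>2 - 2) * ?e \<le> (2 * x - 2) * exp x * ?e" by (rule mult_right_mono[OF h]) simp
    hence h2: "(x\<^sup>2 - 2) * ?e \<le> 2 * x - 2" by (simp add: exp_minus_inverse mult.assoc)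
    have l: "(1 - 2 * ((1 - (1 - ?e) / x) / x)) / x = (x\<^sup>2 - 2 * x + 2 - 2 * ?e) / x ^ 3"
      using x by (simp add: field_simps power2_eq_square power3_eq_cube)
    have r: "(1 - ?e) / x = (x\<^sup>2 * (1 - ?e)) / x ^ 3"
      using x by (simp add: field_simps power2_eq_square power3_eq_cube)
    have "x\<^sup>2 - 2 * x + 2 - 2 * ?e \<le> x\<^sup>2 * (1 - ?e)" using h2 by (simp add: algebra_simps)
    hence "(x\<^sup>2 - 2 * x + 2 - 2 * ?e) / x ^ 3 \<le> (x\<^sup>2 * (1 - ?e)) / x ^ 3"
      using x by (intro divide_right_mono) auto
    hence "(1 - 2 * ((1 - (1 - ?e) / x) / x)) / x \<le> (1 - ?e) / x" using l r by simp
    thus ?thesis using a g0 g1 g2 by simp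
  qed
  thus "0 \<le> g2 x" "g2 x \<le> g0 x" by auto
qed

lemma g0_inv_bounds:
  fixes dt L :: real
  assumes dt: "0 < dt" and L: "0 \<le> L"
  shows "L \<le> 1 / (dt * g0 (dt * L))" "1 / dt + L / 2 \<le> 1 / (dt * g0 (dt * L))"
proof -
  have both: "L \<le> 1 / (dt * g0 (dt * L)) \<and> 1 / dt + L / 2 \<le> 1 / (dt * g0 (dt * L))"
  proof (cases "L = 0")
    case True thus ?thesis using dt by (simp add: g0_def)
  next
    case False
    hence Lp: "0 < L" using L by simp
    define x where "x = dt * L"
    have x: "0 < x" using dt Lp by (simp add: x_def mult_pos_pos)
    let ?e = "exp (- x)"
    have e1: "?e < 1" using x by simp
    have e0: "0 < ?e" by simp
    have eq: "1 / (dt * g0 x) = L / (1 - ?e)"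
      using x dt e1 Lp by (simp add: g0_def x_def field_simps)
    have "L \<le> L / (1 - ?e)" using Lp e1 e0 by (simp add: field_simps)
    moreover have "1 / dt + L / 2 \<le> L / (1 - ?e)"
    proof -
      have B: "2 - x \<le> (2 + x) * ?e" using expB x by simp
      have "(1 / dt + L / 2) * (1 - ?e) \<le> L"
      proof -
        have "(1 / dt + L / 2) * (1 - ?e) = (L / x) * ((1 + x / 2) * (1 - ?e))"
          using dt x by (simp add: x_def field_simps)
        also have "(1 + x / 2) * (1 - ?e) \<le> x" using B by (simp add: field_simps)
        hence "(L / x) * ((1 + x / 2) * (1 - ?e)) \<le> (L / x) * x"
          using Lp x by (intro mult_left_mono) auto
        also have "(L / x) * x = L" using x by simp
        finally show ?thesis .
      qed
      thus ?thesis using e1 by (simp add: field_simps)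
    qed
    ultimately show ?thesis using eq by (simp add: x_def)
  qed
  thus "L \<le> 1 / (dt * g0 (dt * L))" "1 / dt + L / 2 \<le> 1 / (dt * g0 (dt * L))" by auto
qed


lemma poly_ineq:
  fixes k :: real assumes "0 \<le> k"
  shows "2 * k\<^sup>2 * (34/5 + 14/5 * k) * (34/5 + 33/10 * k) ^ 3 \<le> (3 + 11/4 * k) ^ 4 * (3 + 5/2 * k)\<^sup>2"
proof -
  have eq: "5000 * ((12 + 11 * k) ^ 4 * (6 + 5 * k)\<^sup>2) - 2048 * (k\<^sup>2 * (34 + 14 * k) * (68 + 33 * k) ^ 3)
    = 3732480000 + 19906560000 * k + 22324990976 * k^2 + 11475787264 * k^3 + 6275259936 * k^4
      + 3506277984 * k^5 + 799739336 * k^6"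
    by (simp add: algebra_simps eval_nat_numeral)
  have "0 \<le> 3732480000 + 19906560000 * k + 22324990976 * k^2 + 11475787264 * k^3 + 6275259936 * k^4
      + 3506277984 * k^5 + (799739336::real) * k^6" using assms by simp
  hence a: "2048 * (k\<^sup>2 * (34 + 14 * k) * (68 + 33 * k) ^ 3) \<le> 5000 * ((12 + 11 * k) ^ 4 * (6 + 5 * k)\<^sup>2)"
    using eq by linarith
  have b: "2 * k\<^sup>2 * (34/5 + 14/5 * k) * (34/5 + 33/10 * k) ^ 3 = (2048 * (k\<^sup>2 * (34 + 14 * k) * (68 + 33 * k) ^ 3)) / 5120000"
    by (simp add: field_simps eval_nat_numeral)
  have c: "(3 + 11/4 * k) ^ 4 * (3 + 5/2 * k)\<^sup>2 = (5000 * ((12 + 11 * k) ^ 4 * (6 + 5 * k)\<^sup>2)) / 5120000"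
    by (simp add: field_simps eval_nat_numeral)
  show ?thesis unfolding b c by (rule divide_right_mono[OF a]) simp
qed

lemma C4_bounds: "1 \<le> C4" "C4 \<le> 6/5"
proof -
  have e1: "5/2 \<le> exp (1::real)" using exp_lower_Taylor_quadratic[of 1] by simp
  have "exp (2::real) = exp 1 * exp 1" by (simp flip: exp_add)
  also have "(5/2) * (5/2) \<le> exp (1::real) * exp 1" using e1 by (intro mult_mono) auto
  hence "6 \<le> exp (1::real) * exp 1" by simp
  finally have e2: "6 \<le> exp (2::real)" by simp
  have p: "0 < exp (-2::real)" by simp
  have q: "exp (-2::real) \<le> 1/6" using e2 by (simp add: exp_minus field_simps)
  have q1: "exp (-2::real) < 1" using q by simp
  show "1 \<le> C4" using p q1 by (simp add: C4_def field_simps)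
  show "C4 \<le> 6/5" using p q by (simp add: C4_def field_simps)
qed

lemma const_bound:
  fixes eps kappa A :: real
  assumes eps: "0 < eps" and k: "1/4 \<le> kappa"
    and A: "A \<ge> (gamma0 kappa - kappa / 4) ^ 4 / ((alpha0 kappa)\<^sup>2 * eps\<^sup>2)"
  shows "2 * ((5 + 2 * kappa + gamma10 kappa) - kappa) * ((5 + 2 * kappa + gamma10 kappa) - kappa / 2) ^ 3
         \<le> A * eps\<^sup>2"
proof -
  define G where "G = gamma0 kappa"
  have G1: "3 * (1 + kappa) \<le> G"
  proof -
    have "1 * (1 + kappa) \<le> C4 * (1 + kappa)" using C4_bounds(1) k by (intro mult_right_mono) auto
    thus ?thesis by (simp add: G_def gamma0_def)
  qed
  have G2: "G \<le> 18/5 * (1 + kappa)"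
  proof -
    have "C4 * (1 + kappa) \<le> 6/5 * (1 + kappa)" using C4_bounds(2) k by (intro mult_right_mono) auto
    thus ?thesis by (simp add: G_def gamma0_def)
  qed
  have g10: "gamma10 kappa = G / 2" by (simp add: G_def gamma0_def gamma10_def)
  have Gp: "0 < G - kappa / 2" using G1 k by simp
  define r where "r = (G + kappa / 2) / (G - kappa / 2)"
  have r1: "1 < r" using Gp k by (simp add: r_def field_simps)
  have al: "alpha0 kappa = ln r" by (simp add: alpha0_def r_def G_def)
  have alp: "0 < alpha0 kappa" using al r1 by simp
  have alu: "alpha0 kappa \<le> kappa / (G - kappa / 2)"
  proof -
    have "ln r \<le> r - 1" using r1 by (intro ln_le_minus_one) simp
    also have "r - 1 = kappa / (G - kappa / 2)" using Gp by (simp add: r_def field_simps)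
    finally show ?thesis using al by simp
  qed
  have alsq: "(alpha0 kappa)\<^sup>2 \<le> (kappa / (G - kappa / 2))\<^sup>2"
    using alp alu by (intro power_mono) auto
  have kp: "0 < kappa" using k by simp
  define P where "P = (G - kappa / 4) ^ 4"
  have Pp: "0 \<le> P" using G1 k by (simp add: P_def)
  have "P / ((kappa / (G - kappa / 2))\<^sup>2 * eps\<^sup>2) \<le> P / ((alpha0 kappa)\<^sup>2 * eps\<^sup>2)"
    using alsq alp eps Pp by (intro divide_left_mono mult_right_mono mult_pos_pos) auto
  also have "\<dots> \<le> A" using A by (simp add: P_def G_def)
  finally have A1: "P / ((kappa / (G - kappa / 2))\<^sup>2 * eps\<^sup>2) \<le> A" .
  have A2: "P * (G - kappa / 2)\<^sup>2 / kappa\<^sup>2 \<le> A * eps\<^sup>2"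
    using A1 eps kp Gp by (simp add: field_simps power2_eq_square)
  have low: "(3 + 11/4 * kappa) ^ 4 * (3 + 5/2 * kappa)\<^sup>2 \<le> P * (G - kappa / 2)\<^sup>2"
    unfolding P_def using G1 k by (intro mult_mono power_mono) auto
  have Cu: "5 + 2 * kappa + gamma10 kappa \<le> 34/5 + 19/5 * kappa" using G2 g10 by simp
  have up: "2 * ((5 + 2 * kappa + gamma10 kappa) - kappa) * ((5 + 2 * kappa + gamma10 kappa) - kappa / 2) ^ 3
      \<le> 2 * (34/5 + 14/5 * kappa) * (34/5 + 33/10 * kappa) ^ 3"
    using Cu G1 g10 k by (intro mult_mono power_mono) auto
  have "2 * kappa\<^sup>2 * (34/5 + 14/5 * kappa) * (34/5 + 33/10 * kappa) ^ 3 \<le> P * (G - kappa / 2)\<^sup>2"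
    using poly_ineq[of kappa] k low by simp
  hence "2 * (34/5 + 14/5 * kappa) * (34/5 + 33/10 * kappa) ^ 3 \<le> P * (G - kappa / 2)\<^sup>2 / kappa\<^sup>2"
    using kp by (simp add: field_simps)
  thus ?thesis using up A2 by linarith
qed


lemma modeM:
  fixes eps kappa dt A Cp lm :: real
  assumes eps: "0 < eps" and k: "0 < kappa" and dt: "0 < dt" and lm: "0 \<le> lm"
    and Cp: "kappa \<le> Cp" and AC: "2 * (Cp - kappa) * (Cp - kappa / 2) ^ 3 \<le> A * eps\<^sup>2"
  shows "eps\<^sup>2 * lm\<^sup>2 / 2 + Cp * lm \<le> 1 / (dt * g0 (dt * (eps\<^sup>2 * lm\<^sup>2 + kappa * lm))) + A * dt\<^sup>2 * lm\<^sup>2"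
proof -
  define L where "L = eps\<^sup>2 * lm\<^sup>2 + kappa * lm"
  define M0 where "M0 = 1 / (dt * g0 (dt * L))"
  have L0: "0 \<le> L" using lm k by (simp add: L_def)
  have b1: "L \<le> M0" and b2: "1 / dt + L / 2 \<le> M0"
    using g0_inv_bounds[OF dt L0] by (simp_all add: M0_def)
  define c where "c = Cp - kappa / 2"
  have c0: "0 < c" using Cp k by (simp add: c_def)
  have cp3: "0 < c ^ 3" using c0 by simp
  have A0: "0 \<le> A"
  proof -
    have "0 \<le> 2 * (Cp - kappa) * (Cp - kappa / 2) ^ 3" using Cp k by simp
    hence "0 \<le> A * eps\<^sup>2" using AC by linarith
    thus ?thesis using eps by (simp add: zero_le_mult_iff)
  qed
  have Ad: "0 \<le> A * dt\<^sup>2 * lm\<^sup>2" using A0 by simp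
  show ?thesis
  proof (cases "2 * (Cp - kappa) \<le> eps\<^sup>2 * lm")
    case True
    have "Cp * lm \<le> kappa * lm + eps\<^sup>2 * lm * lm / 2"
    proof -
      have "(Cp - kappa) * lm \<le> (eps\<^sup>2 * lm / 2) * lm" using True lm by (intro mult_right_mono) auto
      thus ?thesis by (simp add: algebra_simps)
    qed
    hence "eps\<^sup>2 * lm\<^sup>2 / 2 + Cp * lm \<le> L" by (simp add: L_def power2_eq_square algebra_simps)
    thus ?thesis using b1 Ad by (simp add: M0_def L_def)
  next
    case False
    hence lmb: "eps\<^sup>2 * lm < 2 * (Cp - kappa)" by simp
    have key: "c * lm \<le> 1 / dt + A * dt\<^sup>2 * lm\<^sup>2"
    proof (cases "dt * (c * lm) \<le> 1")
      case True
      have "c * lm \<le> 1 / dt" using True dt by (simp add: field_simps)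
      thus ?thesis using Ad by linarith
    next
      case False
      hence big: "1 < dt * (c * lm)" by simp
      hence lmp: "0 < lm" using dt c0 lm by (cases "lm = 0") auto
      have "c ^ 3 * (eps\<^sup>2 * lm) \<le> c ^ 3 * (2 * (Cp - kappa))" using lmb cp3 by simp
      also have "\<dots> \<le> A * eps\<^sup>2" using AC by (simp add: c_def algebra_simps)
      finally have "c ^ 3 * lm \<le> A" using eps by (simp add: field_simps)
      hence "(c ^ 3 * lm) * lm ^ 2 \<le> A * lm ^ 2" by (rule mult_right_mono) simp
      hence "c * lm * (c * lm) ^ 2 \<le> A * lm ^ 2" 
        by (simp add: power2_eq_square power3_eq_cube algebra_simps)
      also have "\<dots> \<le> A * lm ^ 2 * (dt * (c * lm)) ^ 2"
      proof -
        have "1 \<le> (dt * (c * lm)) ^ 2" using big by (simp add: one_le_power)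
        hence "(A * lm ^ 2) * 1 \<le> (A * lm ^ 2) * (dt * (c * lm)) ^ 2" using A0 by (intro mult_left_mono) auto
        thus ?thesis by simp
      qed
      finally have "c * lm * (c * lm) ^ 2 \<le> (A * dt\<^sup>2 * lm\<^sup>2) * (c * lm) ^ 2"
        by (simp add: power_mult_distrib algebra_simps)
      hence "c * lm \<le> A * dt\<^sup>2 * lm\<^sup>2" using c0 lmp by simp
      thus ?thesis using dt by (simp add: add_increasing)
    qed
    have "eps\<^sup>2 * lm\<^sup>2 / 2 + Cp * lm = c * lm + L / 2" by (simp add: c_def L_def algebra_simps power2_eq_square)
    also have "\<dots> \<le> 1 / dt + L / 2 + A * dt\<^sup>2 * lm\<^sup>2" using key by simp
    also have "\<dots> \<le> M0 + A * dt\<^sup>2 * lm\<^sup>2" using b2 by simp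
    finally show ?thesis by (simp add: M0_def L_def)
  qed
qed


lemma cs2: "(r1 * d1 + r2 * d2)\<^sup>2 \<le> (r1\<^sup>2 + r2\<^sup>2) * (d1\<^sup>2 + d2\<^sup>2)" for r1 r2 d1 d2 :: real
proof -
  have "(r1\<^sup>2 + r2\<^sup>2) * (d1\<^sup>2 + d2\<^sup>2) - (r1 * d1 + r2 * d2)\<^sup>2 = (r1 * d2 - r2 * d1)\<^sup>2"
    by (simp add: power2_eq_square algebra_simps)
  thus ?thesis by (metis diff_ge_0_iff_ge zero_le_power2)
qed

lemma young2: "2 * (a * b) \<le> th * a\<^sup>2 + b\<^sup>2 / th" if "0 < th" for a b th :: real
proof -
  have "0 \<le> (th * a - b)\<^sup>2 / th" using that by simp
  also have "(th * a - b)\<^sup>2 / th = th * a\<^sup>2 + b\<^sup>2 / th - 2 * (a * b)"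
    using that by (simp add: power2_eq_square field_simps)
  finally show ?thesis by simp
qed

lemma rs_bound: "4 * (r1\<^sup>2 + r2\<^sup>2) \<le> (1 + r1\<^sup>2 + r2\<^sup>2)\<^sup>2" for r1 r2 :: real
proof -
  have "(1 + r1\<^sup>2 + r2\<^sup>2)\<^sup>2 - 4 * (r1\<^sup>2 + r2\<^sup>2) = (1 - (r1\<^sup>2 + r2\<^sup>2))\<^sup>2"
    by (simp add: power2_eq_square algebra_simps)
  thus ?thesis by (metis diff_ge_0_iff_ge zero_le_power2)
qed

lemma tangent_ineq:
  fixes p1 p2 d1 d2 :: real
  shows "- ln (1 + (p1 + d1)\<^sup>2 + (p2 + d2)\<^sup>2) / 2
     \<le> - ln (1 + p1\<^sup>2 + p2\<^sup>2) / 2 - (p1 * d1 + p2 * d2) / (1 + p1\<^sup>2 + p2\<^sup>2) + (d1\<^sup>2 + d2\<^sup>2) / 2"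
proof -
  define s where "s = (\<lambda>t::real. 1 + (p1 + t * d1)\<^sup>2 + (p2 + t * d2)\<^sup>2)"
  have sp: "0 < s t" for t unfolding s_def by (simp add: add_pos_nonneg)
  define phi where "phi = (\<lambda>t. - ln (s t) / 2)"
  define psi where "psi = (\<lambda>t. - ((p1 + t * d1) * d1 + (p2 + t * d2) * d2) / s t)"
  define psi' where "psi' = (\<lambda>t. - (d1\<^sup>2 + d2\<^sup>2) / s t + 2 * ((p1 + t * d1) * d1 + (p2 + t * d2) * d2)\<^sup>2 / (s t)\<^sup>2)"
  define s' where "s' = (\<lambda>t::real. 2 * (p1 + t * d1) * d1 + 2 * (p2 + t * d2) * d2)"
  have ds: "(s has_real_derivative s' t) (at t)" for t
    unfolding s_def s'_def by (auto intro!: derivative_eq_intros simp: algebra_simps power2_eq_square)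
  define nn where "nn = (\<lambda>t::real. - ((p1 + t * d1) * d1 + (p2 + t * d2) * d2))"
  have dnn: "(nn has_real_derivative - (d1\<^sup>2 + d2\<^sup>2)) (at t)" for t
    unfolding nn_def by (auto intro!: derivative_eq_intros simp: algebra_simps power2_eq_square)
  have dphi: "(phi has_real_derivative psi t) (at t)" for t
  proof -
    have "((\<lambda>t. ln (s t)) has_real_derivative (1 / s t) * s' t) (at t)"
      by (rule DERIV_chain2[OF DERIV_ln_divide[OF sp] ds])
    hence "((\<lambda>t. - ln (s t) / 2) has_real_derivative - ((1 / s t) * s' t) / 2) (at t)"
      by (intro DERIV_cdivide DERIV_minus)
    moreover have "- ((1 / s t) * s' t) / 2 = psi t" unfolding psi_def s'_def using sp[of t]
      by (simp add: field_simps)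
    ultimately show ?thesis unfolding phi_def by simp
  qed
  have dpsi: "(psi has_real_derivative psi' t) (at t)" for t
  proof -
    have "((\<lambda>t. nn t / s t) has_real_derivative (- (d1\<^sup>2 + d2\<^sup>2) * s t - s' t * nn t) / (s t) ^ Suc (Suc 0)) (at t)"
      using sp[of t] by (intro DERIV_quotient dnn ds) auto
    moreover have "(- (d1\<^sup>2 + d2\<^sup>2) * s t - s' t * nn t) / (s t) ^ Suc (Suc 0) = psi' t"
      unfolding psi'_def s'_def nn_def using sp[of t] by (simp add: field_simps power2_eq_square)
    moreover have "(\<lambda>t. nn t / s t) = psi" unfolding psi_def nn_def by simp
    ultimately show ?thesis by simp
  qed
  have bpsi': "psi' t \<le> (d1\<^sup>2 + d2\<^sup>2) / 2" for t
  proof -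
    let ?r1 = "p1 + t * d1" and ?r2 = "p2 + t * d2"
    have s: "s t = 1 + ?r1\<^sup>2 + ?r2\<^sup>2" by (simp add: s_def)
    have a: "0 \<le> (d1\<^sup>2 + d2\<^sup>2) / s t" using sp[of t] by simp
    have "2 * (?r1 * d1 + ?r2 * d2)\<^sup>2 \<le> 2 * ((?r1\<^sup>2 + ?r2\<^sup>2) * (d1\<^sup>2 + d2\<^sup>2))" using cs2 by simp
    also have "\<dots> \<le> ((s t)\<^sup>2 / 2) * (d1\<^sup>2 + d2\<^sup>2)"
    proof -
      have "2 * (?r1\<^sup>2 + ?r2\<^sup>2) \<le> (s t)\<^sup>2 / 2" using rs_bound[of ?r1 ?r2] s by simp
      hence "(2 * (?r1\<^sup>2 + ?r2\<^sup>2)) * (d1\<^sup>2 + d2\<^sup>2) \<le> ((s t)\<^sup>2 / 2) * (d1\<^sup>2 + d2\<^sup>2)"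
        by (rule mult_right_mono) simp
      thus ?thesis by (simp only: mult.assoc)
    qed
    finally have "2 * (?r1 * d1 + ?r2 * d2)\<^sup>2 / (s t)\<^sup>2 \<le> (d1\<^sup>2 + d2\<^sup>2) / 2"
      using sp[of t] by (simp add: field_simps)
    thus ?thesis using a unfolding psi'_def by linarith
  qed
  obtain z where z: "0 < z" "z < 1" "phi 1 - phi 0 = (1 - 0) * psi z"
    using MVT2[of 0 1 phi psi] dphi by auto
  obtain w where w: "0 < w" "w < z" "psi z - psi 0 = (z - 0) * psi' w"
    using MVT2[of 0 z psi psi'] dpsi z by auto
  have "z * psi' w \<le> z * ((d1\<^sup>2 + d2\<^sup>2) / 2)" using z bpsi' by (intro mult_left_mono) auto
  also have "\<dots> \<le> 1 * ((d1\<^sup>2 + d2\<^sup>2) / 2)" using z by (intro mult_right_mono) auto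
  finally have zb: "z * psi' w \<le> (d1\<^sup>2 + d2\<^sup>2) / 2" by simp
  have e1: "phi 1 - phi 0 = psi z" using z(3) by simp
  have e2: "psi z - psi 0 = z * psi' w" using w(3) by simp
  have "phi 1 \<le> phi 0 + psi 0 + (d1\<^sup>2 + d2\<^sup>2) / 2" using zb e1 e2 by linarith
  thus ?thesis by (simp add: phi_def psi_def s_def add_divide_distrib diff_divide_distrib)
qed

lemma lip_ineq:
  fixes q1 q2 d1 d2 w1 w2 th :: real
  assumes th: "0 < th"
  shows "((q1 + d1) / (1 + (q1 + d1)\<^sup>2 + (q2 + d2)\<^sup>2) - q1 / (1 + q1\<^sup>2 + q2\<^sup>2)) * w1
       + ((q2 + d2) / (1 + (q1 + d1)\<^sup>2 + (q2 + d2)\<^sup>2) - q2 / (1 + q1\<^sup>2 + q2\<^sup>2)) * w2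
     \<le> 3/4 * (th * (d1\<^sup>2 + d2\<^sup>2) + (w1\<^sup>2 + w2\<^sup>2) / th)"
proof -
  define s where "s = (\<lambda>t::real. 1 + (q1 + t * d1)\<^sup>2 + (q2 + t * d2)\<^sup>2)"
  have sp: "0 < s t" for t unfolding s_def by (simp add: add_pos_nonneg)
  define psi where "psi = (\<lambda>t. ((q1 + t * d1) * w1 + (q2 + t * d2) * w2) / s t)"
  define psi' where "psi' = (\<lambda>t. (d1 * w1 + d2 * w2) / s t
      - 2 * ((q1 + t * d1) * w1 + (q2 + t * d2) * w2) * ((q1 + t * d1) * d1 + (q2 + t * d2) * d2) / (s t)\<^sup>2)"
  define s' where "s' = (\<lambda>t::real. 2 * (q1 + t * d1) * d1 + 2 * (q2 + t * d2) * d2)"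
  have ds: "(s has_real_derivative s' t) (at t)" for t
    unfolding s_def s'_def by (auto intro!: derivative_eq_intros simp: algebra_simps power2_eq_square)
  define nn where "nn = (\<lambda>t::real. (q1 + t * d1) * w1 + (q2 + t * d2) * w2)"
  have dnn: "(nn has_real_derivative (d1 * w1 + d2 * w2)) (at t)" for t
    unfolding nn_def by (auto intro!: derivative_eq_intros simp: algebra_simps power2_eq_square)
  have dpsi: "(psi has_real_derivative psi' t) (at t)" for t
  proof -
    have "((\<lambda>t. nn t / s t) has_real_derivative ((d1 * w1 + d2 * w2) * s t - s' t * nn t) / (s t) ^ Suc (Suc 0)) (at t)"
      using sp[of t] by (intro DERIV_quotient dnn ds) auto
    moreover have "((d1 * w1 + d2 * w2) * s t - s' t * nn t) / (s t) ^ Suc (Suc 0) = psi' t"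
      unfolding psi'_def s'_def nn_def using sp[of t] by (simp add: field_simps power2_eq_square)
    moreover have "(\<lambda>t. nn t / s t) = psi" unfolding psi_def nn_def by simp
    ultimately show ?thesis by simp
  qed
  have bpsi': "psi' t \<le> 3/4 * (th * (d1\<^sup>2 + d2\<^sup>2) + (w1\<^sup>2 + w2\<^sup>2) / th)" for t
  proof -
    let ?r1 = "q1 + t * d1" and ?r2 = "q2 + t * d2"
    define B where "B = th * (d1\<^sup>2 + d2\<^sup>2) + (w1\<^sup>2 + w2\<^sup>2) / th"
    have s: "s t = 1 + ?r1\<^sup>2 + ?r2\<^sup>2" by (simp add: s_def)
    have s1: "1 \<le> s t" using s by simp
    have B0: "0 \<le> B" using th by (simp add: B_def)
    have a0: "2 * (d1 * w1 + d2 * w2) \<le> B"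
      using young2[OF th, of d1 w1] young2[OF th, of d2 w2] unfolding B_def by (simp add: algebra_simps add_divide_distrib)
    have a1: "(d1 * w1 + d2 * w2) / s t \<le> B / 2"
    proof (cases "0 \<le> d1 * w1 + d2 * w2")
      case True
      have "(d1 * w1 + d2 * w2) / s t \<le> (d1 * w1 + d2 * w2) / 1" using s1 True by (intro divide_left_mono) auto
      hence "(d1 * w1 + d2 * w2) / s t \<le> d1 * w1 + d2 * w2" by simp
      moreover have "d1 * w1 + d2 * w2 \<le> B / 2" using a0 by simp
      ultimately show ?thesis by (rule order_trans)
    next
      case False
      hence "(d1 * w1 + d2 * w2) / s t \<le> 0" using sp[of t] by (simp add: divide_nonpos_pos)
      thus ?thesis using B0 by linarith
    qed
    have "- 2 * ((?r1 * w1 + ?r2 * w2) * (?r1 * d1 + ?r2 * d2)) \<le> th * (?r1 * d1 + ?r2 * d2)\<^sup>2 + (?r1 * w1 + ?r2 * w2)\<^sup>2 / th"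
      using young2[OF th, of "?r1 * d1 + ?r2 * d2" "- (?r1 * w1 + ?r2 * w2)"]
      by (simp only: power2_minus) (simp add: algebra_simps)
    also have "\<dots> \<le> th * ((?r1\<^sup>2 + ?r2\<^sup>2) * (d1\<^sup>2 + d2\<^sup>2)) + ((?r1\<^sup>2 + ?r2\<^sup>2) * (w1\<^sup>2 + w2\<^sup>2)) / th"
      using cs2[of ?r1 d1 ?r2 d2] cs2[of ?r1 w1 ?r2 w2] th
      by (intro add_mono mult_left_mono divide_right_mono) auto
    also have "\<dots> = (?r1\<^sup>2 + ?r2\<^sup>2) * B" by (simp add: B_def algebra_simps add_divide_distrib)
    also have "\<dots> \<le> ((s t)\<^sup>2 / 4) * B" using rs_bound[of ?r1 ?r2] s B0 by (intro mult_right_mono) auto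
    finally have f1: "- 2 * ((?r1 * w1 + ?r2 * w2) * (?r1 * d1 + ?r2 * d2)) \<le> ((s t)\<^sup>2 / 4) * B" .
    have "(- 2 * ((?r1 * w1 + ?r2 * w2) * (?r1 * d1 + ?r2 * d2))) / (s t)\<^sup>2 \<le> (((s t)\<^sup>2 / 4) * B) / (s t)\<^sup>2"
      using sp[of t] by (intro divide_right_mono[OF f1]) simp
    also have "(((s t)\<^sup>2 / 4) * B) / (s t)\<^sup>2 = B / 4" using sp[of t] by simp
    also have "(- 2 * ((?r1 * w1 + ?r2 * w2) * (?r1 * d1 + ?r2 * d2))) / (s t)\<^sup>2
       = - (2 * (?r1 * w1 + ?r2 * w2) * (?r1 * d1 + ?r2 * d2) / (s t)\<^sup>2)" by (simp add: mult.assoc)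
    finally have f2: "- (2 * (?r1 * w1 + ?r2 * w2) * (?r1 * d1 + ?r2 * d2) / (s t)\<^sup>2) \<le> B / 4" .
    have "psi' t \<le> 3/4 * B" using a1 f2 unfolding psi'_def by linarith
    thus ?thesis by (simp add: B_def)
  qed
  obtain z where z: "0 < z" "z < 1" "psi 1 - psi 0 = (1 - 0) * psi' z"
    using MVT2[of 0 1 psi psi'] dpsi by auto
  have "psi 1 - psi 0 \<le> 3/4 * (th * (d1\<^sup>2 + d2\<^sup>2) + (w1\<^sup>2 + w2\<^sup>2) / th)" using z bpsi' by simp
  moreover have "psi 1 - psi 0 = ((q1 + d1) / (1 + (q1 + d1)\<^sup>2 + (q2 + d2)\<^sup>2) - q1 / (1 + q1\<^sup>2 + q2\<^sup>2)) * w1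
       + ((q2 + d2) / (1 + (q1 + d1)\<^sup>2 + (q2 + d2)\<^sup>2) - q2 / (1 + q1\<^sup>2 + q2\<^sup>2)) * w2"
    by (simp add: psi_def s_def algebra_simps add_divide_distrib)
  ultimately show ?thesis by simp
qed


definition msum :: "nat \<Rightarrow> (int \<Rightarrow> int \<Rightarrow> 'a::comm_monoid_add) \<Rightarrow> 'a" where
  "msum K \<phi> = (\<Sum>k\<in>{- int K..int K}. \<Sum>l\<in>{- int K..int K}. \<phi> k l)"

lemma msum_add: "msum K (\<lambda>k l. f k l + g k l) = msum K f + msum K g"
  by (simp add: msum_def sum.distrib)
lemma msum_diff: "msum K (\<lambda>k l. (f k l :: 'a::ab_group_add) - g k l) = msum K f - msum K g"
  by (simp add: msum_def sum_subtractf)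
lemma msum_neg: "msum K (\<lambda>k l. - (f k l :: 'a::ab_group_add)) = - msum K f"
  by (simp add: msum_def sum_negf)
lemma msum_cmult: "msum K (\<lambda>k l. (c :: 'a::comm_ring_1) * f k l) = c * msum K f"
  by (simp add: msum_def sum_distrib_left)
lemma msum_mono: "(\<And>k l. k \<in> {- int K..int K} \<Longrightarrow> l \<in> {- int K..int K} \<Longrightarrow> (f k l :: real) \<le> g k l) \<Longrightarrow> msum K f \<le> msum K g"
  unfolding msum_def by (intro sum_mono) auto
lemma msum_cong: "(\<And>k l. k \<in> {- int K..int K} \<Longrightarrow> l \<in> {- int K..int K} \<Longrightarrow> f k l = g k l) \<Longrightarrow> msum K f = msum K g"
  unfolding msum_def by (intro sum.cong) auto
lemma Re_msum: "Re (msum K f) = msum K (\<lambda>k l. Re (f k l))"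
  by (simp add: msum_def)
lemma msum_nonneg: "(\<And>k l. k \<in> {- int K..int K} \<Longrightarrow> l \<in> {- int K..int K} \<Longrightarrow> 0 \<le> (f k l :: real)) \<Longrightarrow> 0 \<le> msum K f"
  unfolding msum_def by (intro sum_nonneg) auto

definition nsq :: "complex \<Rightarrow> real" where "nsq z = Re (z * cnj z)"

lemma nsq_eq: "nsq z = (Re z)\<^sup>2 + (Im z)\<^sup>2" by (simp add: nsq_def power2_eq_square)
lemma nsq_nonneg: "0 \<le> nsq z" by (simp add: nsq_eq)

lemma ip_msum: "ip K f g = msum K (\<lambda>k l. Re (dft K f k l * cnj (dft K g k l)))"
  by (simp add: ip_fourier msum_def)

lemma norm2sq_msum: "norm2sq K f = msum K (\<lambda>k l. nsq (dft K f k l))"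
  by (simp add: norm2sq_def ip_msum nsq_def)

lemma dft_add: "dft K (\<lambda>a b. f a b + g a b) k l = dft K f k l + dft K g k l"
  by (simp add: dft_def sum.distrib distrib_left distrib_right)
lemma dft_diff: "dft K (\<lambda>a b. f a b - g a b) k l = dft K f k l - dft K g k l"
  by (simp add: dft_def sum_subtractf right_diff_distrib left_diff_distrib)
lemma dft_cmult: "dft K (\<lambda>a b. c * f a b) k l = complex_of_real c * dft K f k l"
  by (simp add: dft_def sum_distrib_left algebra_simps)
lemma dft_cong: "(\<And>i j. i < gridN K \<Longrightarrow> j < gridN K \<Longrightarrow> f i j = g i j) \<Longrightarrow> dft K f = dft K g"
  unfolding dft_def by (intro ext sum.cong refl) auto
lemma fmult_cong_dft: "(\<And>k l. dft K f k l = dft K g k l) \<Longrightarrow> fmult K m f = fmult K m g"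
  unfolding fmult_def by (intro ext) simp
lemma fmult_diff: "fmult K m (\<lambda>a b. f a b - g a b) i j = fmult K m f i j - fmult K m g i j"
  by (simp add: fmult_def dft_diff algebra_simps sum_subtractf)

lemma herm_real: "(\<And>k l. r (- k) (- l) = r k l) \<Longrightarrow> herm (\<lambda>k l. complex_of_real (r k l))"
  by (simp add: herm_def)
lemma lam_neg [simp]: "lam (- k) (- l) = lam k l" by (simp add: lam_def power2_eq_square)
lemma LamL_neg [simp]: "LamL e c (- k) (- l) = LamL e c k l" by (simp add: LamL_def)
lemma herm_DNx: "herm (\<lambda>k l. \<i> * complex_of_real (2 * pi * real_of_int k))"
  by (simp add: herm_def)
lemma herm_DNy: "herm (\<lambda>k l. \<i> * complex_of_real (2 * pi * real_of_int l))"
  by (simp add: herm_def)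

abbreviation Ix :: "nat \<Rightarrow> int set" where "Ix K \<equiv> {- int K..int K}"

lemma dft_DNx: "k \<in> Ix K \<Longrightarrow> l \<in> Ix K \<Longrightarrow> dft K (DNx K f) k l = \<i> * complex_of_real (2 * pi * real_of_int k) * dft K f k l"
  unfolding DNx_def by (rule dft_fmult[OF herm_DNx])
lemma dft_DNy: "k \<in> Ix K \<Longrightarrow> l \<in> Ix K \<Longrightarrow> dft K (DNy K f) k l = \<i> * complex_of_real (2 * pi * real_of_int l) * dft K f k l"
  unfolding DNy_def by (rule dft_fmult[OF herm_DNy])
lemma dft_LapN: "k \<in> Ix K \<Longrightarrow> l \<in> Ix K \<Longrightarrow> dft K (LapN K f) k l = complex_of_real (- lam k l) * dft K f k l"
  unfolding LapN_def by (rule dft_fmult) (rule herm_real, simp)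
lemma dft_Lap2N: "k \<in> Ix K \<Longrightarrow> l \<in> Ix K \<Longrightarrow> dft K (Lap2N K f) k l = complex_of_real ((lam k l)\<^sup>2) * dft K f k l"
  unfolding Lap2N_def by (rule dft_fmult) (rule herm_real, simp)
lemma dft_expL: "k \<in> Ix K \<Longrightarrow> l \<in> Ix K \<Longrightarrow> dft K (expL K e c dt f) k l = complex_of_real (exp (- dt * LamL e c k l)) * dft K f k l"
  unfolding expL_def by (rule dft_fmult) (rule herm_real, simp)
lemma dft_phiL: "k \<in> Ix K \<Longrightarrow> l \<in> Ix K \<Longrightarrow> dft K (phiL g K e c dt f) k l = complex_of_real (g (dt * LamL e c k l)) * dft K f k l"
  unfolding phiL_def by (rule dft_fmult) (rule herm_real, simp)

lemma lam_eq: "(2 * pi * real_of_int k)\<^sup>2 + (2 * pi * real_of_int l)\<^sup>2 = lam k l"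
  by (simp add: lam_def power2_eq_square algebra_simps)

lemma lam_nonneg: "0 \<le> lam k l" by (simp add: lam_def)

lemma gradnorm2sq_msum: "gradnorm2sq K f = msum K (\<lambda>k l. lam k l * nsq (dft K f k l))"
proof -
  have "gradnorm2sq K f = msum K (\<lambda>k l. nsq (dft K (DNx K f) k l) + nsq (dft K (DNy K f) k l))"
    by (simp add: gradnorm2sq_def norm2sq_msum msum_add)
  also have "\<dots> = msum K (\<lambda>k l. lam k l * nsq (dft K f k l))"
  proof (rule msum_cong)
    fix k l assume "k \<in> Ix K" "l \<in> Ix K"
    thus "nsq (dft K (DNx K f) k l) + nsq (dft K (DNy K f) k l) = lam k l * nsq (dft K f k l)"
      by (simp add: dft_DNx dft_DNy nsq_eq lam_def power2_eq_square algebra_simps)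
  qed
  finally show ?thesis .
qed

lemma norm2sq_Lap_msum: "norm2sq K (LapN K f) = msum K (\<lambda>k l. (lam k l)\<^sup>2 * nsq (dft K f k l))"
  unfolding norm2sq_msum
  by (rule msum_cong) (simp add: dft_LapN nsq_eq power2_eq_square algebra_simps)

lemma ip_DNx: "ip K (DNx K f) g = - ip K f (DNx K g)"
proof -
  have "ip K (DNx K f) g = msum K (\<lambda>k l. - Re (dft K f k l * cnj (dft K (DNx K g) k l)))"
    unfolding ip_msum by (rule msum_cong) (simp add: dft_DNx algebra_simps)
  also have "\<dots> = - ip K f (DNx K g)" unfolding ip_msum by (rule msum_neg)
  finally show ?thesis .
qed
lemma ip_DNy: "ip K (DNy K f) g = - ip K f (DNy K g)"
proof -
  have "ip K (DNy K f) g = msum K (\<lambda>k l. - Re (dft K f k l * cnj (dft K (DNy K g) k l)))"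
    unfolding ip_msum by (rule msum_cong) (simp add: dft_DNy algebra_simps)
  also have "\<dots> = - ip K f (DNy K g)" unfolding ip_msum by (rule msum_neg)
  finally show ?thesis .
qed

lemma ip_add1: "ip K (\<lambda>a b. f a b + g a b) h = ip K f h + ip K g h"
  by (simp add: ip_def sum.distrib distrib_left distrib_right)
lemma ip_diff1: "ip K (\<lambda>a b. f a b - g a b) h = ip K f h - ip K g h"
  by (simp add: ip_def sum_subtractf left_diff_distrib right_diff_distrib)

lemma DNx_diff: "DNx K (\<lambda>a b. f a b - g a b) i j = DNx K f i j - DNx K g i j"
  unfolding DNx_def by (rule fmult_diff)
lemma DNy_diff: "DNy K (\<lambda>a b. f a b - g a b) i j = DNy K f i j - DNy K g i j"
  unfolding DNy_def by (rule fmult_diff)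


definition Phix :: "nat \<Rightarrow> grid \<Rightarrow> grid" where
  "Phix K v = (\<lambda>a b. DNx K v a b / (1 + gradsq K v a b))"
definition Phiy :: "nat \<Rightarrow> grid \<Rightarrow> grid" where
  "Phiy K v = (\<lambda>a b. DNy K v a b / (1 + gradsq K v a b))"
definition Psi :: "nat \<Rightarrow> grid \<Rightarrow> grid" where
  "Psi K v = (\<lambda>a b. DNx K (Phix K v) a b + DNy K (Phiy K v) a b)"
definition E1 :: "nat \<Rightarrow> grid \<Rightarrow> real" where
  "E1 K v = (gridh K)\<^sup>2 * (\<Sum>i<gridN K. \<Sum>j<gridN K. - (1/2) * ln (1 + gradsq K v i j))"

lemma fN_Psi: "fN K kappa v = (\<lambda>i j. Psi K v i j + kappa * LapN K v i j)"
  by (intro ext) (simp add: fN_def Psi_def Phix_def Phiy_def)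

lemma EN_E1: "EN K eps v = E1 K v + eps\<^sup>2 / 2 * norm2sq K (LapN K v)"
  by (simp add: EN_def E1_def)

lemma ip_Psi: "ip K (Psi K u) w = - ((gridh K)\<^sup>2 * (\<Sum>i<gridN K. \<Sum>j<gridN K.
      Phix K u i j * DNx K w i j + Phiy K u i j * DNy K w i j))"
proof -
  have "ip K (Psi K u) w = - ip K (Phix K u) (DNx K w) - ip K (Phiy K u) (DNy K w)"
    unfolding Psi_def by (simp add: ip_add1 ip_DNx ip_DNy)
  also have "\<dots> = - ((gridh K)\<^sup>2 * (\<Sum>i<gridN K. \<Sum>j<gridN K.
      Phix K u i j * DNx K w i j + Phiy K u i j * DNy K w i j))"
    by (simp add: ip_def sum.distrib algebra_simps)
  finally show ?thesis .
qed

lemma gradnorm2sq_sum: "gradnorm2sq K w = (gridh K)\<^sup>2 * (\<Sum>i<gridN K. \<Sum>j<gridN K.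
      (DNx K w i j)\<^sup>2 + (DNy K w i j)\<^sup>2)"
  by (simp add: gradnorm2sq_def norm2sq_def ip_def sum.distrib algebra_simps power2_eq_square)

lemma E1_tangent:
  "E1 K v \<le> E1 K u + ip K (Psi K u) (\<lambda>a b. v a b - u a b) + 1/2 * gradnorm2sq K (\<lambda>a b. v a b - u a b)"
proof -
  let ?d = "\<lambda>a b. v a b - u a b"
  let ?N = "gridN K"
  have pw: "- (1/2) * ln (1 + gradsq K v i j) \<le> - (1/2) * ln (1 + gradsq K u i j)
     - (Phix K u i j * DNx K ?d i j + Phiy K u i j * DNy K ?d i j)
     + 1/2 * ((DNx K ?d i j)\<^sup>2 + (DNy K ?d i j)\<^sup>2)" for i j
  proof -
    have t: "- ln (1 + (DNx K u i j + DNx K ?d i j)\<^sup>2 + (DNy K u i j + DNy K ?d i j)\<^sup>2) / 2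
     \<le> - ln (1 + (DNx K u i j)\<^sup>2 + (DNy K u i j)\<^sup>2) / 2
       - (DNx K u i j * DNx K ?d i j + DNy K u i j * DNy K ?d i j) / (1 + (DNx K u i j)\<^sup>2 + (DNy K u i j)\<^sup>2)
       + ((DNx K ?d i j)\<^sup>2 + (DNy K ?d i j)\<^sup>2) / 2"
      by (rule tangent_ineq)
    have e1: "DNx K u i j + DNx K ?d i j = DNx K v i j" by (simp add: DNx_diff)
    have e2: "DNy K u i j + DNy K ?d i j = DNy K v i j" by (simp add: DNy_diff)
    show ?thesis using t unfolding e1 e2
      by (simp add: gradsq_def Phix_def Phiy_def add_divide_distrib add.assoc)
  qed
  have "(\<Sum>i<?N. \<Sum>j<?N. - (1/2) * ln (1 + gradsq K v i j)) \<le> (\<Sum>i<?N. \<Sum>j<?N. - (1/2) * ln (1 + gradsq K u i j)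
     - (Phix K u i j * DNx K ?d i j + Phiy K u i j * DNy K ?d i j)
     + 1/2 * ((DNx K ?d i j)\<^sup>2 + (DNy K ?d i j)\<^sup>2))"
    by (intro sum_mono pw)
  also have "\<dots> = (\<Sum>i<?N. \<Sum>j<?N. - (1/2) * ln (1 + gradsq K u i j))
     - (\<Sum>i<?N. \<Sum>j<?N. Phix K u i j * DNx K ?d i j + Phiy K u i j * DNy K ?d i j)
     + 1/2 * (\<Sum>i<?N. \<Sum>j<?N. (DNx K ?d i j)\<^sup>2 + (DNy K ?d i j)\<^sup>2)"
    by (simp add: sum.distrib sum_subtractf sum_distrib_left add_divide_distrib sum_divide_distrib)
  finally have S: "(\<Sum>i<?N. \<Sum>j<?N. - (1/2) * ln (1 + gradsq K v i j)) \<le> \<dots>" .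
  have h: "0 \<le> (gridh K)\<^sup>2" by simp
  have "E1 K v \<le> (gridh K)\<^sup>2 * ((\<Sum>i<?N. \<Sum>j<?N. - (1/2) * ln (1 + gradsq K u i j))
     - (\<Sum>i<?N. \<Sum>j<?N. Phix K u i j * DNx K ?d i j + Phiy K u i j * DNy K ?d i j)
     + 1/2 * (\<Sum>i<?N. \<Sum>j<?N. (DNx K ?d i j)\<^sup>2 + (DNy K ?d i j)\<^sup>2))"
    unfolding E1_def by (rule mult_left_mono[OF S h])
  also have "\<dots> = E1 K u + ip K (Psi K u) ?d + 1/2 * gradnorm2sq K ?d"
    unfolding E1_def ip_Psi gradnorm2sq_sum by (simp add: algebra_simps)
  finally show ?thesis .
qed

lemma NL_bound:
  assumes th: "0 < th"
  shows "\<bar>ip K (\<lambda>a b. Psi K u a b - Psi K v a b) w\<bar>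
    \<le> 3/4 * (th * gradnorm2sq K (\<lambda>a b. u a b - v a b) + gradnorm2sq K w / th)"
proof -
  let ?d = "\<lambda>a b. u a b - v a b"
  let ?N = "gridN K"
  define T where "T = (\<lambda>i j. (Phix K u i j - Phix K v i j) * DNx K w i j + (Phiy K u i j - Phiy K v i j) * DNy K w i j)"
  define R where "R = (\<lambda>i j. 3/4 * (th * ((DNx K ?d i j)\<^sup>2 + (DNy K ?d i j)\<^sup>2) + ((DNx K w i j)\<^sup>2 + (DNy K w i j)\<^sup>2) / th))"
  have ipT: "ip K (\<lambda>a b. Psi K u a b - Psi K v a b) w = - ((gridh K)\<^sup>2 * (\<Sum>i<?N. \<Sum>j<?N. T i j))"
    unfolding ip_diff1 ip_Psi T_def by (simp add: sum_subtractf algebra_simps)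
  have RS: "3/4 * (th * gradnorm2sq K ?d + gradnorm2sq K w / th) = (gridh K)\<^sup>2 * (\<Sum>i<?N. \<Sum>j<?N. R i j)"
    unfolding gradnorm2sq_sum R_def
    by (simp add: sum.distrib sum_distrib_left sum_divide_distrib algebra_simps add_divide_distrib)
  have pw: "\<bar>T i j\<bar> \<le> R i j" for i j
  proof -
    let ?q1 = "DNx K v i j" and ?q2 = "DNy K v i j" and ?d1 = "DNx K ?d i j" and ?d2 = "DNy K ?d i j"
    have e1: "?q1 + ?d1 = DNx K u i j" by (simp add: DNx_diff)
    have e2: "?q2 + ?d2 = DNy K u i j" by (simp add: DNy_diff)
    have Teq: "T i j = ((?q1 + ?d1) / (1 + (?q1 + ?d1)\<^sup>2 + (?q2 + ?d2)\<^sup>2) - ?q1 / (1 + ?q1\<^sup>2 + ?q2\<^sup>2)) * DNx K w i j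
       + ((?q2 + ?d2) / (1 + (?q1 + ?d1)\<^sup>2 + (?q2 + ?d2)\<^sup>2) - ?q2 / (1 + ?q1\<^sup>2 + ?q2\<^sup>2)) * DNy K w i j"
      unfolding e1 e2 T_def Phix_def Phiy_def gradsq_def by (simp add: add.assoc)
    have a: "T i j \<le> R i j"
      unfolding Teq R_def by (rule lip_ineq[OF th])
    have b: "- T i j \<le> R i j"
    proof -
      have "((?q1 + ?d1) / (1 + (?q1 + ?d1)\<^sup>2 + (?q2 + ?d2)\<^sup>2) - ?q1 / (1 + ?q1\<^sup>2 + ?q2\<^sup>2)) * (- DNx K w i j)
       + ((?q2 + ?d2) / (1 + (?q1 + ?d1)\<^sup>2 + (?q2 + ?d2)\<^sup>2) - ?q2 / (1 + ?q1\<^sup>2 + ?q2\<^sup>2)) * (- DNy K w i j)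
       \<le> 3/4 * (th * (?d1\<^sup>2 + ?d2\<^sup>2) + ((- DNx K w i j)\<^sup>2 + (- DNy K w i j)\<^sup>2) / th)"
        by (rule lip_ineq[OF th])
      thus ?thesis unfolding Teq R_def by simp
    qed
    show ?thesis using a b by linarith
  qed
  have "\<bar>\<Sum>i<?N. \<Sum>j<?N. T i j\<bar> \<le> (\<Sum>i<?N. \<Sum>j<?N. \<bar>T i j\<bar>)"
    by (rule order_trans[OF sum_abs]) (intro sum_mono sum_abs)
  also have "\<dots> \<le> (\<Sum>i<?N. \<Sum>j<?N. R i j)" by (intro sum_mono pw)
  finally have "\<bar>\<Sum>i<?N. \<Sum>j<?N. T i j\<bar> \<le> (\<Sum>i<?N. \<Sum>j<?N. R i j)" .
  hence "(gridh K)\<^sup>2 * \<bar>\<Sum>i<?N. \<Sum>j<?N. T i j\<bar> \<le> (gridh K)\<^sup>2 * (\<Sum>i<?N. \<Sum>j<?N. R i j)"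
    by (rule mult_left_mono) simp
  thus ?thesis unfolding ipT RS by (simp add: abs_mult)
qed


lemma young_c: "0 < th \<Longrightarrow> 2 * Re (a * cnj d) \<le> th * nsq a + nsq d / th"
  using young2[of th "Re a" "Re d"] young2[of th "Im a" "Im d"]
  by (simp add: nsq_eq algebra_simps add_divide_distrib)

lemma young_c': "0 < th \<Longrightarrow> - 2 * Re (a * cnj d) \<le> th * nsq a + nsq d / th"
  using young_c[of th "- a" d] by (simp add: nsq_eq)

lemma mode_scalar:
  fixes lm M r1 r2 Dn an bn cA cB kappa g1 g3 eps :: real
  assumes lm: "0 \<le> lm" and M: "eps\<^sup>2 * lm\<^sup>2 / 2 + (5 + 2 * kappa + g1) * lm \<le> M"
    and r1: "0 \<le> r1" "r1 \<le> 2" and r2: "0 \<le> r2" "r2 \<le> 1"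
    and Dn: "0 \<le> Dn" and an: "0 \<le> an" and bn: "0 \<le> bn"
    and cA: "2 * cA \<le> an + Dn" and cB: "- 2 * cB \<le> bn / 2 + 2 * Dn"
    and k: "0 \<le> kappa" and gg: "3/4 + kappa \<le> g1 - g3" and g3: "3/8 + kappa / 4 \<le> g3"
  shows "(- M + lm / 2 + eps\<^sup>2 * lm\<^sup>2 / 2) * Dn + kappa * lm * r1 * cA - kappa * lm * r2 * cB
     + 3/4 * (lm * r1\<^sup>2 * Dn) + 3/2 * (lm * r2\<^sup>2 * Dn) + g1 * lm * Dn
     + (3/4 + g3 - g1) * lm * an + (3/8 - g3) * lm * bn \<le> 0"
proof -
  have kl: "0 \<le> kappa * lm" using k lm by simp
  have t1: "kappa * lm * r1 * cA \<le> kappa * lm * (an + Dn)"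
  proof -
    have "r1 * (2 * cA) \<le> r1 * (an + Dn)" using r1 cA by (intro mult_left_mono) auto
    also have "\<dots> \<le> 2 * (an + Dn)" using r1 an Dn by (intro mult_right_mono) auto
    finally have "r1 * cA \<le> an + Dn" by simp
    hence "(kappa * lm) * (r1 * cA) \<le> (kappa * lm) * (an + Dn)" using kl by (rule mult_left_mono)
    thus ?thesis by (simp add: mult.assoc)
  qed
  have t2: "- (kappa * lm * r2 * cB) \<le> kappa * lm * (bn / 4 + Dn)"
  proof -
    have "r2 * (- 2 * cB) \<le> r2 * (bn / 2 + 2 * Dn)" using r2 cB by (intro mult_left_mono) auto
    also have "\<dots> \<le> 1 * (bn / 2 + 2 * Dn)" using r2 bn Dn by (intro mult_right_mono) auto
    finally have "- (r2 * cB) \<le> bn / 4 + Dn" by simp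
    hence "(kappa * lm) * (- (r2 * cB)) \<le> (kappa * lm) * (bn / 4 + Dn)" using kl by (rule mult_left_mono)
    thus ?thesis by (simp add: mult.assoc)
  qed
  have t3: "lm * r1\<^sup>2 * Dn \<le> 4 * (lm * Dn)"
  proof -
    have "r1\<^sup>2 \<le> 2\<^sup>2" using r1 by (intro power_mono) auto
    hence "r1\<^sup>2 * (lm * Dn) \<le> 4 * (lm * Dn)" using lm Dn by (intro mult_right_mono) auto
    thus ?thesis by (simp add: algebra_simps)
  qed
  have t4: "lm * r2\<^sup>2 * Dn \<le> 1 * (lm * Dn)"
  proof -
    have "r2\<^sup>2 \<le> 1\<^sup>2" using r2 by (intro power_mono) auto
    hence "r2\<^sup>2 * (lm * Dn) \<le> 1 * (lm * Dn)" using lm Dn by (intro mult_right_mono) auto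
    thus ?thesis by (simp add: algebra_simps)
  qed
  have t5: "(eps\<^sup>2 * lm\<^sup>2 / 2 + (5 + 2 * kappa + g1) * lm) * Dn \<le> M * Dn"
    using M Dn by (rule mult_right_mono)
  have t6: "(3/4 + g3 - g1 + kappa) * (lm * an) \<le> 0"
    using gg lm an by (intro mult_nonpos_nonneg) auto
  have t7: "(3/8 - g3 + kappa / 4) * (lm * bn) \<le> 0"
    using g3 lm bn by (intro mult_nonpos_nonneg) auto
  show ?thesis using t1 t2 t3 t4 t5 t6 t7 by (simp add: algebra_simps)
qed


lemma mode_identity:
  fixes U0 U1 Um1 Um2 P0 Pm1 Pm2 :: complex
    and dt G0 G1 G2 A lm Lam eps kappa e :: real
  assumes dt: "0 < dt" and G0: "0 < G0" and e: "e = 1 - dt * Lam * G0"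
    and Lam: "Lam = eps\<^sup>2 * lm\<^sup>2 + kappa * lm"
    and sch: "U1 = of_real e * U0 - of_real (A * dt ^ 3 * G0 * lm\<^sup>2) * (U1 - U0)
       - of_real (dt * G0) * (P0 - of_real (kappa * lm) * U0)
       - of_real (dt * G1) * (3/2 * (P0 - of_real (kappa * lm) * U0) - 2 * (Pm1 - of_real (kappa * lm) * Um1) + 1/2 * (Pm2 - of_real (kappa * lm) * Um2))
       - of_real (dt * G2) * (1/2 * (P0 - of_real (kappa * lm) * U0) - (Pm1 - of_real (kappa * lm) * Um1) + 1/2 * (Pm2 - of_real (kappa * lm) * Um2))"
  shows "Re (P0 * cnj (U1 - U0)) + lm * nsq (U1 - U0) / 2 + eps\<^sup>2 / 2 * (lm\<^sup>2 * nsq U1 - lm\<^sup>2 * nsq U0)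
    = (- (1 / (dt * G0) + A * dt\<^sup>2 * lm\<^sup>2) + lm / 2 + eps\<^sup>2 * lm\<^sup>2 / 2) * nsq (U1 - U0)
      - ((3 * G1 + G2) / (2 * G0)) * Re ((P0 - Pm1) * cnj (U1 - U0))
      + kappa * lm * ((3 * G1 + G2) / (2 * G0)) * Re ((U0 - Um1) * cnj (U1 - U0))
      + ((G1 + G2) / (2 * G0)) * Re ((Pm1 - Pm2) * cnj (U1 - U0))
      - kappa * lm * ((G1 + G2) / (2 * G0)) * Re ((Um1 - Um2) * cnj (U1 - U0))"
proof -
  have hr: "Re U1 = e * Re U0 - (A * dt ^ 3 * G0 * lm\<^sup>2) * (Re U1 - Re U0)
       - (dt * G0) * (Re P0 - (kappa * lm) * Re U0)
       - (dt * G1) * (3/2 * (Re P0 - (kappa * lm) * Re U0) - 2 * (Re Pm1 - (kappa * lm) * Re Um1) + 1/2 * (Re Pm2 - (kappa * lm) * Re Um2))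
       - (dt * G2) * (1/2 * (Re P0 - (kappa * lm) * Re U0) - (Re Pm1 - (kappa * lm) * Re Um1) + 1/2 * (Re Pm2 - (kappa * lm) * Re Um2))"
    using arg_cong[OF sch, of Re] by simp
  have hi: "Im U1 = e * Im U0 - (A * dt ^ 3 * G0 * lm\<^sup>2) * (Im U1 - Im U0)
       - (dt * G0) * (Im P0 - (kappa * lm) * Im U0)
       - (dt * G1) * (3/2 * (Im P0 - (kappa * lm) * Im U0) - 2 * (Im Pm1 - (kappa * lm) * Im Um1) + 1/2 * (Im Pm2 - (kappa * lm) * Im Um2))
       - (dt * G2) * (1/2 * (Im P0 - (kappa * lm) * Im U0) - (Im Pm1 - (kappa * lm) * Im Um1) + 1/2 * (Im Pm2 - (kappa * lm) * Im Um2))"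
    using arg_cong[OF sch, of Im] by simp
  have dG: "dt * G0 \<noteq> 0" using dt G0 by simp
  define M where "M = 1 / (dt * G0) + A * dt\<^sup>2 * lm\<^sup>2"
  define r1 where "r1 = (3 * G1 + G2) / (2 * G0)"
  define r2 where "r2 = (G1 + G2) / (2 * G0)"
  have cM: "dt * G0 * M = 1 + A * dt ^ 3 * G0 * lm\<^sup>2" using dG by (simp add: M_def field_simps power2_eq_square power3_eq_cube)
  have c1: "dt * G0 * r1 = dt * (3 * G1 + G2) / 2" using G0 by (simp add: r1_def field_simps)
  have c2: "dt * G0 * r2 = dt * (G1 + G2) / 2" using G0 by (simp add: r2_def field_simps)
  define Wr where "Wr = Re P0 + M * (Re U1 - Re U0) + eps\<^sup>2 * lm\<^sup>2 * Re U0
      + r1 * (Re P0 - Re Pm1 - kappa * lm * (Re U0 - Re Um1)) - r2 * (Re Pm1 - Re Pm2 - kappa * lm * (Re Um1 - Re Um2))"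
  define Wi where "Wi = Im P0 + M * (Im U1 - Im U0) + eps\<^sup>2 * lm\<^sup>2 * Im U0
      + r1 * (Im P0 - Im Pm1 - kappa * lm * (Im U0 - Im Um1)) - r2 * (Im Pm1 - Im Pm2 - kappa * lm * (Im Um1 - Im Um2))"
  have "dt * G0 * Wr = (dt * G0 * M) * (Re U1 - Re U0) + dt * G0 * Re P0 + dt * G0 * eps\<^sup>2 * lm\<^sup>2 * Re U0
      + (dt * G0 * r1) * (Re P0 - Re Pm1 - kappa * lm * (Re U0 - Re Um1)) - (dt * G0 * r2) * (Re Pm1 - Re Pm2 - kappa * lm * (Re Um1 - Re Um2))"
    by (simp add: Wr_def algebra_simps)
  also have "\<dots> = 0" unfolding cM c1 c2 using hr by (simp add: e Lam field_simps)
  finally have Wr0: "Wr = 0" using dG by simp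
  have "dt * G0 * Wi = (dt * G0 * M) * (Im U1 - Im U0) + dt * G0 * Im P0 + dt * G0 * eps\<^sup>2 * lm\<^sup>2 * Im U0
      + (dt * G0 * r1) * (Im P0 - Im Pm1 - kappa * lm * (Im U0 - Im Um1)) - (dt * G0 * r2) * (Im Pm1 - Im Pm2 - kappa * lm * (Im Um1 - Im Um2))"
    by (simp add: Wi_def algebra_simps)
  also have "\<dots> = 0" unfolding cM c1 c2 using hi by (simp add: e Lam field_simps)
  finally have Wi0: "Wi = 0" using dG by simp
  have "Re (P0 * cnj (U1 - U0)) + lm * nsq (U1 - U0) / 2 + eps\<^sup>2 / 2 * (lm\<^sup>2 * nsq U1 - lm\<^sup>2 * nsq U0)
    - ((- M + lm / 2 + eps\<^sup>2 * lm\<^sup>2 / 2) * nsq (U1 - U0)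
      - r1 * Re ((P0 - Pm1) * cnj (U1 - U0))
      + kappa * lm * r1 * Re ((U0 - Um1) * cnj (U1 - U0))
      + r2 * Re ((Pm1 - Pm2) * cnj (U1 - U0))
      - kappa * lm * r2 * Re ((Um1 - Um2) * cnj (U1 - U0)))
    = Wr * (Re U1 - Re U0) + Wi * (Im U1 - Im U0)"
    by (simp add: nsq_eq Wr_def Wi_def field_simps power2_eq_square)
  thus ?thesis using Wr0 Wi0 by (simp add: M_def r1_def r2_def)
qed


lemma dft_fN: "k \<in> Ix K \<Longrightarrow> l \<in> Ix K \<Longrightarrow>
  dft K (fN K kappa v) k l = dft K (Psi K v) k l - of_real (kappa * lam k l) * dft K v k l"
  unfolding fN_Psi by (simp add: dft_add dft_cmult dft_LapN)

lemma mode_scheme: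
  fixes eps kappa dt A :: real and K :: nat and u :: "int \<Rightarrow> grid" and n :: int
  assumes scheme: "\<And>i j. i < gridN K \<Longrightarrow> j < gridN K \<Longrightarrow>
      u (n + 1) i j =
        expL K eps kappa dt (u n) i j
      - A * dt ^ 3 * phiL g0 K eps kappa dt (Lap2N K (\<lambda>a b. u (n + 1) a b - u n a b)) i j
      - dt * phiL g0 K eps kappa dt (fN K kappa (u n)) i j
      - dt * phiL g1 K eps kappa dt (\<lambda>a b. 3/2 * fN K kappa (u n) a b
            - 2 * fN K kappa (u (n - 1)) a b + 1/2 * fN K kappa (u (n - 2)) a b) i j
      - dt * phiL g2 K eps kappa dt (\<lambda>a b. 1/2 * fN K kappa (u n) a b
            - fN K kappa (u (n - 1)) a b + 1/2 * fN K kappa (u (n - 2)) a b) i j"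
    and k: "k \<in> Ix K" and l: "l \<in> Ix K"
  shows "dft K (u (n + 1)) k l =
      of_real (exp (- dt * LamL eps kappa k l)) * dft K (u n) k l
    - of_real (A * dt ^ 3 * g0 (dt * LamL eps kappa k l) * (lam k l)\<^sup>2) * (dft K (u (n + 1)) k l - dft K (u n) k l)
    - of_real (dt * g0 (dt * LamL eps kappa k l)) * (dft K (Psi K (u n)) k l - of_real (kappa * lam k l) * dft K (u n) k l)
    - of_real (dt * g1 (dt * LamL eps kappa k l)) * (3/2 * (dft K (Psi K (u n)) k l - of_real (kappa * lam k l) * dft K (u n) k l)
         - 2 * (dft K (Psi K (u (n - 1))) k l - of_real (kappa * lam k l) * dft K (u (n - 1)) k l)
         + 1/2 * (dft K (Psi K (u (n - 2))) k l - of_real (kappa * lam k l) * dft K (u (n - 2)) k l))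
    - of_real (dt * g2 (dt * LamL eps kappa k l)) * (1/2 * (dft K (Psi K (u n)) k l - of_real (kappa * lam k l) * dft K (u n) k l)
         - (dft K (Psi K (u (n - 1))) k l - of_real (kappa * lam k l) * dft K (u (n - 1)) k l)
         + 1/2 * (dft K (Psi K (u (n - 2))) k l - of_real (kappa * lam k l) * dft K (u (n - 2)) k l))"
proof -
  have "dft K (u (n + 1)) = dft K (\<lambda>i j. expL K eps kappa dt (u n) i j
      - A * dt ^ 3 * phiL g0 K eps kappa dt (Lap2N K (\<lambda>a b. u (n + 1) a b - u n a b)) i j
      - dt * phiL g0 K eps kappa dt (fN K kappa (u n)) i j
      - dt * phiL g1 K eps kappa dt (\<lambda>a b. 3/2 * fN K kappa (u n) a b
            - 2 * fN K kappa (u (n - 1)) a b + 1/2 * fN K kappa (u (n - 2)) a b) i j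
      - dt * phiL g2 K eps kappa dt (\<lambda>a b. 1/2 * fN K kappa (u n) a b
            - fN K kappa (u (n - 1)) a b + 1/2 * fN K kappa (u (n - 2)) a b) i j)"
    by (rule dft_cong) (rule scheme)
  hence "dft K (u (n + 1)) k l = dft K (\<lambda>i j. expL K eps kappa dt (u n) i j
      - A * dt ^ 3 * phiL g0 K eps kappa dt (Lap2N K (\<lambda>a b. u (n + 1) a b - u n a b)) i j
      - dt * phiL g0 K eps kappa dt (fN K kappa (u n)) i j
      - dt * phiL g1 K eps kappa dt (\<lambda>a b. 3/2 * fN K kappa (u n) a b
            - 2 * fN K kappa (u (n - 1)) a b + 1/2 * fN K kappa (u (n - 2)) a b) i j
      - dt * phiL g2 K eps kappa dt (\<lambda>a b. 1/2 * fN K kappa (u n) a b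
            - fN K kappa (u (n - 1)) a b + 1/2 * fN K kappa (u (n - 2)) a b) i j) k l" by simp
  also have "\<dots> = of_real (exp (- dt * LamL eps kappa k l)) * dft K (u n) k l
    - of_real (A * dt ^ 3) * (of_real (g0 (dt * LamL eps kappa k l)) * (of_real ((lam k l)\<^sup>2) * (dft K (u (n + 1)) k l - dft K (u n) k l)))
    - of_real dt * (of_real (g0 (dt * LamL eps kappa k l)) * dft K (fN K kappa (u n)) k l)
    - of_real dt * (of_real (g1 (dt * LamL eps kappa k l)) * (of_real (3/2) * dft K (fN K kappa (u n)) k l
         - of_real 2 * dft K (fN K kappa (u (n - 1))) k l + of_real (1/2) * dft K (fN K kappa (u (n - 2))) k l))
    - of_real dt * (of_real (g2 (dt * LamL eps kappa k l)) * (of_real (1/2) * dft K (fN K kappa (u n)) k l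
         - dft K (fN K kappa (u (n - 1))) k l + of_real (1/2) * dft K (fN K kappa (u (n - 2))) k l))"
    using k l by (simp only: dft_diff dft_add dft_cmult dft_expL dft_phiL dft_Lap2N)
  also have "\<dots> = of_real (exp (- dt * LamL eps kappa k l)) * dft K (u n) k l
    - of_real (A * dt ^ 3 * g0 (dt * LamL eps kappa k l) * (lam k l)\<^sup>2) * (dft K (u (n + 1)) k l - dft K (u n) k l)
    - of_real (dt * g0 (dt * LamL eps kappa k l)) * (dft K (Psi K (u n)) k l - of_real (kappa * lam k l) * dft K (u n) k l)
    - of_real (dt * g1 (dt * LamL eps kappa k l)) * (3/2 * (dft K (Psi K (u n)) k l - of_real (kappa * lam k l) * dft K (u n) k l)
         - 2 * (dft K (Psi K (u (n - 1))) k l - of_real (kappa * lam k l) * dft K (u (n - 1)) k l)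
         + 1/2 * (dft K (Psi K (u (n - 2))) k l - of_real (kappa * lam k l) * dft K (u (n - 2)) k l))
    - of_real (dt * g2 (dt * LamL eps kappa k l)) * (1/2 * (dft K (Psi K (u n)) k l - of_real (kappa * lam k l) * dft K (u n) k l)
         - (dft K (Psi K (u (n - 1))) k l - of_real (kappa * lam k l) * dft K (u (n - 1)) k l)
         + 1/2 * (dft K (Psi K (u (n - 2))) k l - of_real (kappa * lam k l) * dft K (u (n - 2)) k l))"
    using k l by (simp add: dft_fN field_simps)
  finally show ?thesis .
qed


lemma nsq_scale: "nsq (of_real r * z) = r\<^sup>2 * nsq z"
  by (simp add: nsq_eq power2_eq_square algebra_simps)

lemma g_even: "g (dt * LamL eps kappa (- k) (- l)) = g (dt * LamL eps kappa k l)" by simp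

lemma step:
  fixes eps kappa dt A :: real and K :: nat and u :: "int \<Rightarrow> grid" and n :: int
  assumes eps: "0 < eps" and kap: "1/4 \<le> kappa" and dt: "0 < dt"
    and AC: "2 * ((5 + 2 * kappa + gamma10 kappa) - kappa) * ((5 + 2 * kappa + gamma10 kappa) - kappa / 2) ^ 3 \<le> A * eps\<^sup>2"
    and scheme: "\<And>i j. i < gridN K \<Longrightarrow> j < gridN K \<Longrightarrow>
      u (n + 1) i j =
        expL K eps kappa dt (u n) i j
      - A * dt ^ 3 * phiL g0 K eps kappa dt (Lap2N K (\<lambda>a b. u (n + 1) a b - u n a b)) i j
      - dt * phiL g0 K eps kappa dt (fN K kappa (u n)) i j
      - dt * phiL g1 K eps kappa dt (\<lambda>a b. 3/2 * fN K kappa (u n) a b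
            - 2 * fN K kappa (u (n - 1)) a b + 1/2 * fN K kappa (u (n - 2)) a b) i j
      - dt * phiL g2 K eps kappa dt (\<lambda>a b. 1/2 * fN K kappa (u n) a b
            - fN K kappa (u (n - 1)) a b + 1/2 * fN K kappa (u (n - 2)) a b) i j"
  shows "EN K eps (u (n + 1)) + gamma10 kappa * gradnorm2sq K (\<lambda>a b. u (n + 1) a b - u n a b)
           + gamma30 kappa * gradnorm2sq K (\<lambda>a b. u n a b - u (n - 1) a b)
         \<le> EN K eps (u n) + gamma10 kappa * gradnorm2sq K (\<lambda>a b. u n a b - u (n - 1) a b)
           + gamma30 kappa * gradnorm2sq K (\<lambda>a b. u (n - 1) a b - u (n - 2) a b)"
proof -
  define Dg where "Dg = (\<lambda>a b. u (n + 1) a b - u n a b)"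
  define Ag where "Ag = (\<lambda>a b. u n a b - u (n - 1) a b)"
  define Bg where "Bg = (\<lambda>a b. u (n - 1) a b - u (n - 2) a b)"
  define U where "U = (\<lambda>m. dft K (u m))"
  define P where "P = (\<lambda>m. dft K (Psi K (u m)))"
  define x where "x = (\<lambda>k l. dt * LamL eps kappa k l)"
  define M where "M = (\<lambda>k l. 1 / (dt * g0 (x k l)) + A * dt\<^sup>2 * (lam k l)\<^sup>2)"
  define r1 where "r1 = (\<lambda>k l. (3 * g1 (x k l) + g2 (x k l)) / (2 * g0 (x k l)))"
  define r2 where "r2 = (\<lambda>k l. (g1 (x k l) + g2 (x k l)) / (2 * g0 (x k l)))"
  define Dh where "Dh = (\<lambda>k l. U (n + 1) k l - U n k l)"
  define ah where "ah = (\<lambda>k l. U n k l - U (n - 1) k l)"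
  define bh where "bh = (\<lambda>k l. U (n - 1) k l - U (n - 2) k l)"
  define g1c where "g1c = gamma10 kappa"
  define g3c where "g3c = gamma30 kappa"
  have kp: "0 < kappa" using kap by simp
  have x0: "0 \<le> x k l" for k l using dt kp by (simp add: x_def LamL_def lam_nonneg)
  have dDg: "dft K Dg k l = Dh k l" for k l by (simp add: Dg_def Dh_def U_def dft_diff)
  have dAg: "dft K Ag k l = ah k l" for k l by (simp add: Ag_def ah_def U_def dft_diff)
  have dBg: "dft K Bg k l = bh k l" for k l by (simp add: Bg_def bh_def U_def dft_diff)
  have E1t: "E1 K (u (n + 1)) \<le> E1 K (u n) + ip K (Psi K (u n)) Dg + 1/2 * gradnorm2sq K Dg"
    unfolding Dg_def by (rule E1_tangent)
  have ipP: "ip K (Psi K (u n)) Dg = msum K (\<lambda>k l. Re (P n k l * cnj (Dh k l)))"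
    by (simp add: ip_msum dDg P_def)
  have X: "gradnorm2sq K Dg = msum K (\<lambda>k l. lam k l * nsq (Dh k l))"
    by (simp add: gradnorm2sq_msum dDg)
  have Y: "gradnorm2sq K Ag = msum K (\<lambda>k l. lam k l * nsq (ah k l))"
    by (simp add: gradnorm2sq_msum dAg)
  have Z: "gradnorm2sq K Bg = msum K (\<lambda>k l. lam k l * nsq (bh k l))"
    by (simp add: gradnorm2sq_msum dBg)
  have L1: "norm2sq K (LapN K (u (n + 1))) = msum K (\<lambda>k l. (lam k l)\<^sup>2 * nsq (U (n + 1) k l))"
    by (simp add: norm2sq_Lap_msum U_def)
  have L0: "norm2sq K (LapN K (u n)) = msum K (\<lambda>k l. (lam k l)\<^sup>2 * nsq (U n k l))"
    by (simp add: norm2sq_Lap_msum U_def)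
  have Ediff: "EN K eps (u (n + 1)) - EN K eps (u n) \<le> msum K (\<lambda>k l. Re (P n k l * cnj (Dh k l))
      + lam k l * nsq (Dh k l) / 2 + eps\<^sup>2 / 2 * ((lam k l)\<^sup>2 * nsq (U (n + 1) k l) - (lam k l)\<^sup>2 * nsq (U n k l)))"
  proof -
    have "EN K eps (u (n + 1)) - EN K eps (u n) \<le> ip K (Psi K (u n)) Dg + 1/2 * gradnorm2sq K Dg
        + eps\<^sup>2 / 2 * (norm2sq K (LapN K (u (n + 1))) - norm2sq K (LapN K (u n)))"
      using E1t unfolding EN_E1 by (simp add: algebra_simps)
    also have "\<dots> = msum K (\<lambda>k l. Re (P n k l * cnj (Dh k l))
      + lam k l * nsq (Dh k l) / 2 + eps\<^sup>2 / 2 * ((lam k l)\<^sup>2 * nsq (U (n + 1) k l) - (lam k l)\<^sup>2 * nsq (U n k l)))"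
      unfolding ipP X L1 L0 by (simp add: msum_def sum.distrib sum_subtractf sum_distrib_left sum_divide_distrib algebra_simps)
    finally show ?thesis .
  qed
  have Mid: "msum K (\<lambda>k l. Re (P n k l * cnj (Dh k l))
      + lam k l * nsq (Dh k l) / 2 + eps\<^sup>2 / 2 * ((lam k l)\<^sup>2 * nsq (U (n + 1) k l) - (lam k l)\<^sup>2 * nsq (U n k l)))
    = msum K (\<lambda>k l. (- M k l + lam k l / 2 + eps\<^sup>2 * (lam k l)\<^sup>2 / 2) * nsq (Dh k l)
      - r1 k l * Re ((P n k l - P (n - 1) k l) * cnj (Dh k l))
      + kappa * lam k l * r1 k l * Re (ah k l * cnj (Dh k l))
      + r2 k l * Re ((P (n - 1) k l - P (n - 2) k l) * cnj (Dh k l))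
      - kappa * lam k l * r2 k l * Re (bh k l * cnj (Dh k l)))"
  proof (rule msum_cong)
    fix k l assume k: "k \<in> Ix K" and l: "l \<in> Ix K"
    have sch: "U (n + 1) k l =
      of_real (exp (- dt * LamL eps kappa k l)) * U n k l
    - of_real (A * dt ^ 3 * g0 (x k l) * (lam k l)\<^sup>2) * (U (n + 1) k l - U n k l)
    - of_real (dt * g0 (x k l)) * (P n k l - of_real (kappa * lam k l) * U n k l)
    - of_real (dt * g1 (x k l)) * (3/2 * (P n k l - of_real (kappa * lam k l) * U n k l)
         - 2 * (P (n - 1) k l - of_real (kappa * lam k l) * U (n - 1) k l)
         + 1/2 * (P (n - 2) k l - of_real (kappa * lam k l) * U (n - 2) k l))
    - of_real (dt * g2 (x k l)) * (1/2 * (P n k l - of_real (kappa * lam k l) * U n k l)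
         - (P (n - 1) k l - of_real (kappa * lam k l) * U (n - 1) k l)
         + 1/2 * (P (n - 2) k l - of_real (kappa * lam k l) * U (n - 2) k l))"
      unfolding U_def P_def x_def by (rule mode_scheme[OF scheme k l])
    have e: "exp (- dt * LamL eps kappa k l) = 1 - dt * LamL eps kappa k l * g0 (x k l)"
      using exp_g0[of "dt * LamL eps kappa k l"] by (simp add: x_def)
    have "Re (P n k l * cnj (U (n + 1) k l - U n k l)) + lam k l * nsq (U (n + 1) k l - U n k l) / 2
        + eps\<^sup>2 / 2 * ((lam k l)\<^sup>2 * nsq (U (n + 1) k l) - (lam k l)\<^sup>2 * nsq (U n k l))
      = (- (1 / (dt * g0 (x k l)) + A * dt\<^sup>2 * (lam k l)\<^sup>2) + lam k l / 2 + eps\<^sup>2 * (lam k l)\<^sup>2 / 2) * nsq (U (n + 1) k l - U n k l)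
      - ((3 * g1 (x k l) + g2 (x k l)) / (2 * g0 (x k l))) * Re ((P n k l - P (n - 1) k l) * cnj (U (n + 1) k l - U n k l))
      + kappa * lam k l * ((3 * g1 (x k l) + g2 (x k l)) / (2 * g0 (x k l))) * Re ((U n k l - U (n - 1) k l) * cnj (U (n + 1) k l - U n k l))
      + ((g1 (x k l) + g2 (x k l)) / (2 * g0 (x k l))) * Re ((P (n - 1) k l - P (n - 2) k l) * cnj (U (n + 1) k l - U n k l))
      - kappa * lam k l * ((g1 (x k l) + g2 (x k l)) / (2 * g0 (x k l))) * Re ((U (n - 1) k l - U (n - 2) k l) * cnj (U (n + 1) k l - U n k l))"
      by (rule mode_identity[OF dt g0_pos[OF x0] e _ sch]) (simp add: LamL_def)
    thus "Re (P n k l * cnj (Dh k l))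
      + lam k l * nsq (Dh k l) / 2 + eps\<^sup>2 / 2 * ((lam k l)\<^sup>2 * nsq (U (n + 1) k l) - (lam k l)\<^sup>2 * nsq (U n k l))
    = (- M k l + lam k l / 2 + eps\<^sup>2 * (lam k l)\<^sup>2 / 2) * nsq (Dh k l)
      - r1 k l * Re ((P n k l - P (n - 1) k l) * cnj (Dh k l))
      + kappa * lam k l * r1 k l * Re (ah k l * cnj (Dh k l))
      + r2 k l * Re ((P (n - 1) k l - P (n - 2) k l) * cnj (Dh k l))
      - kappa * lam k l * r2 k l * Re (bh k l * cnj (Dh k l))"
      unfolding M_def r1_def r2_def Dh_def ah_def bh_def by simp
  qed
  define w1 where "w1 = fmult K (\<lambda>k l. of_real (r1 k l)) Dg"
  define w2 where "w2 = fmult K (\<lambda>k l. of_real (r2 k l)) Dg"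
  have hr1: "herm (\<lambda>k l. of_real (r1 k l))" by (rule herm_real) (simp add: r1_def x_def)
  have hr2: "herm (\<lambda>k l. of_real (r2 k l))" by (rule herm_real) (simp add: r2_def x_def)
  have dw1: "dft K w1 k l = of_real (r1 k l) * Dh k l" if "k \<in> Ix K" "l \<in> Ix K" for k l
    unfolding w1_def using dft_fmult[OF hr1 that] dDg by simp
  have dw2: "dft K w2 k l = of_real (r2 k l) * Dh k l" if "k \<in> Ix K" "l \<in> Ix K" for k l
    unfolding w2_def using dft_fmult[OF hr2 that] dDg by simp
  have N1: "msum K (\<lambda>k l. r1 k l * Re ((P n k l - P (n - 1) k l) * cnj (Dh k l)))
      = ip K (\<lambda>a b. Psi K (u n) a b - Psi K (u (n - 1)) a b) w1"
    unfolding ip_msum by (rule msum_cong) (simp add: dw1 dft_diff P_def algebra_simps)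
  have N2: "msum K (\<lambda>k l. r2 k l * Re ((P (n - 1) k l - P (n - 2) k l) * cnj (Dh k l)))
      = ip K (\<lambda>a b. Psi K (u (n - 1)) a b - Psi K (u (n - 2)) a b) w2"
    unfolding ip_msum by (rule msum_cong) (simp add: dw2 dft_diff P_def algebra_simps)
  have gw1: "gradnorm2sq K w1 = msum K (\<lambda>k l. lam k l * ((r1 k l)\<^sup>2 * nsq (Dh k l)))"
    unfolding gradnorm2sq_msum by (rule msum_cong) (simp add: dw1 nsq_scale)
  have gw2: "gradnorm2sq K w2 = msum K (\<lambda>k l. lam k l * ((r2 k l)\<^sup>2 * nsq (Dh k l)))"
    unfolding gradnorm2sq_msum by (rule msum_cong) (simp add: dw2 nsq_scale)
  have B1: "\<bar>ip K (\<lambda>a b. Psi K (u n) a b - Psi K (u (n - 1)) a b) w1\<bar>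
      \<le> 3/4 * (1 * gradnorm2sq K Ag + gradnorm2sq K w1 / 1)"
    unfolding Ag_def by (rule NL_bound) simp
  have B2: "\<bar>ip K (\<lambda>a b. Psi K (u (n - 1)) a b - Psi K (u (n - 2)) a b) w2\<bar>
      \<le> 3/4 * (1/2 * gradnorm2sq K Bg + gradnorm2sq K w2 / (1/2))"
    unfolding Bg_def by (rule NL_bound) simp
  define Smain where "Smain = msum K (\<lambda>k l. (- M k l + lam k l / 2 + eps\<^sup>2 * (lam k l)\<^sup>2 / 2) * nsq (Dh k l)
      + kappa * lam k l * r1 k l * Re (ah k l * cnj (Dh k l))
      - kappa * lam k l * r2 k l * Re (bh k l * cnj (Dh k l)))"
  have split: "msum K (\<lambda>k l. (- M k l + lam k l / 2 + eps\<^sup>2 * (lam k l)\<^sup>2 / 2) * nsq (Dh k l)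
      - r1 k l * Re ((P n k l - P (n - 1) k l) * cnj (Dh k l))
      + kappa * lam k l * r1 k l * Re (ah k l * cnj (Dh k l))
      + r2 k l * Re ((P (n - 1) k l - P (n - 2) k l) * cnj (Dh k l))
      - kappa * lam k l * r2 k l * Re (bh k l * cnj (Dh k l)))
    = Smain - msum K (\<lambda>k l. r1 k l * Re ((P n k l - P (n - 1) k l) * cnj (Dh k l)))
      + msum K (\<lambda>k l. r2 k l * Re ((P (n - 1) k l - P (n - 2) k l) * cnj (Dh k l)))"
    unfolding Smain_def msum_def by (simp add: sum.distrib sum_subtractf algebra_simps)
  define T where "T = (\<lambda>k l. (- M k l + lam k l / 2 + eps\<^sup>2 * (lam k l)\<^sup>2 / 2) * nsq (Dh k l)
     + kappa * lam k l * r1 k l * Re (ah k l * cnj (Dh k l)) - kappa * lam k l * r2 k l * Re (bh k l * cnj (Dh k l))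
     + 3/4 * (lam k l * (r1 k l)\<^sup>2 * nsq (Dh k l)) + 3/2 * (lam k l * (r2 k l)\<^sup>2 * nsq (Dh k l)) + g1c * lam k l * nsq (Dh k l)
     + (3/4 + g3c - g1c) * lam k l * nsq (ah k l) + (3/8 - g3c) * lam k l * nsq (bh k l))"
  have Tsplit: "msum K T = Smain + 3/4 * msum K (\<lambda>k l. lam k l * ((r1 k l)\<^sup>2 * nsq (Dh k l)))
      + 3/2 * msum K (\<lambda>k l. lam k l * ((r2 k l)\<^sup>2 * nsq (Dh k l)))
      + g1c * msum K (\<lambda>k l. lam k l * nsq (Dh k l))
      + (3/4 + g3c - g1c) * msum K (\<lambda>k l. lam k l * nsq (ah k l))
      + (3/8 - g3c) * msum K (\<lambda>k l. lam k l * nsq (bh k l))"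
    unfolding T_def Smain_def msum_def by (simp add: sum.distrib sum_subtractf sum_distrib_left algebra_simps)
  have C41: "1 \<le> C4" by (rule C4_bounds(1))
  have g1c0: "0 \<le> g1c" using C41 kp by (simp add: g1c_def gamma10_def)
  have gg: "3/4 + kappa \<le> g1c - g3c"
  proof -
    have "1 * (1 + kappa) \<le> C4 * (1 + kappa)" using C41 kp by (intro mult_right_mono) auto
    moreover have "g1c - g3c = C4 * (1 + kappa)" unfolding g1c_def g3c_def gamma10_def gamma30_def by (simp add: algebra_simps)
    ultimately show ?thesis by simp
  qed
  have g3: "3/8 + kappa / 4 \<le> g3c"
  proof -
    have "1 * (1 + kappa) \<le> C4 * (1 + kappa)" using C41 kp by (intro mult_right_mono) auto
    moreover have "g3c = C4 * (1 + kappa) / 2" unfolding g3c_def gamma30_def by simp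
    ultimately show ?thesis using kp by (simp add: field_simps)
  qed
  have Tneg: "msum K T \<le> 0"
  proof -
    have "msum K T \<le> msum K (\<lambda>k l. 0)"
    proof (rule msum_mono)
      fix k l
      let ?G0 = "g0 (x k l)" and ?G1 = "g1 (x k l)" and ?G2 = "g2 (x k l)"
      have G0: "0 < ?G0" by (rule g0_pos[OF x0])
      have G1: "0 \<le> ?G1" "?G1 \<le> ?G0" using g1_facts[OF x0] by auto
      have G2: "0 \<le> ?G2" "?G2 \<le> ?G0" using g2_facts[OF x0] by auto
      have r1a: "0 \<le> r1 k l" using G0 G1 G2 by (simp add: r1_def)
      have r1b: "r1 k l \<le> 2" using G0 G1 G2 by (simp add: r1_def field_simps)
      have r2a: "0 \<le> r2 k l" using G0 G1 G2 by (simp add: r2_def)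
      have r2b: "r2 k l \<le> 1" using G0 G1 G2 by (simp add: r2_def field_simps)
      have Mb: "eps\<^sup>2 * (lam k l)\<^sup>2 / 2 + (5 + 2 * kappa + g1c) * lam k l \<le> M k l"
      proof -
        have Cp: "kappa \<le> 5 + 2 * kappa + gamma10 kappa" using g1c0 kp unfolding g1c_def by linarith
        have "eps\<^sup>2 * (lam k l)\<^sup>2 / 2 + (5 + 2 * kappa + gamma10 kappa) * lam k l
          \<le> 1 / (dt * g0 (dt * (eps\<^sup>2 * (lam k l)\<^sup>2 + kappa * lam k l))) + A * dt\<^sup>2 * (lam k l)\<^sup>2"
          by (rule modeM[OF eps kp dt lam_nonneg Cp AC])
        thus ?thesis by (simp add: M_def x_def LamL_def g1c_def)
      qed
      have cA: "2 * Re (ah k l * cnj (Dh k l)) \<le> nsq (ah k l) + nsq (Dh k l)"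
        using young_c[of 1 "ah k l" "Dh k l"] by simp
      have cB: "- 2 * Re (bh k l * cnj (Dh k l)) \<le> nsq (bh k l) / 2 + 2 * nsq (Dh k l)"
        using young_c'[of "1/2" "bh k l" "Dh k l"] by simp
      show "T k l \<le> 0" unfolding T_def
        by (rule mode_scalar[OF lam_nonneg Mb r1a r1b r2a r2b nsq_nonneg nsq_nonneg nsq_nonneg cA cB _ gg g3])
           (use kp in simp)
    qed
    thus ?thesis by (simp add: msum_def)
  qed
  have Ediff2: "EN K eps (u (n + 1)) - EN K eps (u n) \<le> Smain
      - ip K (\<lambda>a b. Psi K (u n) a b - Psi K (u (n - 1)) a b) w1
      + ip K (\<lambda>a b. Psi K (u (n - 1)) a b - Psi K (u (n - 2)) a b) w2"
    using Ediff unfolding Mid split N1 N2 .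
  have "EN K eps (u (n + 1)) + g1c * gradnorm2sq K Dg + g3c * gradnorm2sq K Ag
      \<le> EN K eps (u n) + g1c * gradnorm2sq K Ag + g3c * gradnorm2sq K Bg"
  proof -
    define Xm where "Xm = msum K (\<lambda>k l. lam k l * nsq (Dh k l))"
    define Ym where "Ym = msum K (\<lambda>k l. lam k l * nsq (ah k l))"
    define Zm where "Zm = msum K (\<lambda>k l. lam k l * nsq (bh k l))"
    define Q1 where "Q1 = msum K (\<lambda>k l. lam k l * ((r1 k l)\<^sup>2 * nsq (Dh k l)))"
    define Q2 where "Q2 = msum K (\<lambda>k l. lam k l * ((r2 k l)\<^sup>2 * nsq (Dh k l)))"
    have t: "Smain + 3/4 * Q1 + 3/2 * Q2 + g1c * Xm + (3/4 + g3c - g1c) * Ym + (3/8 - g3c) * Zm \<le> 0"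
      using Tneg unfolding Tsplit Xm_def Ym_def Zm_def Q1_def Q2_def .
    have e1: "(3/4 + g3c - g1c) * Ym = 3/4 * Ym + g3c * Ym - g1c * Ym" by (simp add: algebra_simps)
    have e2: "(3/8 - g3c) * Zm = 3/8 * Zm - g3c * Zm" by (simp add: algebra_simps)
    have b1: "\<bar>ip K (\<lambda>a b. Psi K (u n) a b - Psi K (u (n - 1)) a b) w1\<bar> \<le> 3/4 * Ym + 3/4 * Q1"
      using B1 unfolding gw1 Y Ym_def Q1_def by simp
    have b2: "\<bar>ip K (\<lambda>a b. Psi K (u (n - 1)) a b - Psi K (u (n - 2)) a b) w2\<bar> \<le> 3/8 * Zm + 3/2 * Q2"
      using B2 unfolding gw2 Z Zm_def Q2_def by simp
    show ?thesis unfolding X Y Z Xm_def[symmetric] Ym_def[symmetric] Zm_def[symmetric]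
      using Ediff2 b1 b2 t e1 e2 by linarith
  qed
  thus ?thesis by (simp add: Dg_def Ag_def Bg_def g1c_def g3c_def)
qed


theorem corollary2p1:
  fixes eps kappa dt A :: real and K :: nat and u :: "int \<Rightarrow> grid"
  assumes "eps > 0" and "kappa \<ge> 1/4" and "dt > 0"
    and "A \<ge> (gamma0 kappa - kappa / 4) ^ 4 / ((alpha0 kappa)\<^sup>2 * eps\<^sup>2)"
    and "gmean K (u (-2)) = gmean K (u 0)" and "gmean K (u (-1)) = gmean K (u 0)"
    and scheme: "\<And>n i j. n \<ge> 0 \<Longrightarrow> i < gridN K \<Longrightarrow> j < gridN K \<Longrightarrow>
      u (n + 1) i j =
        expL K eps kappa dt (u n) i j
      - A * dt ^ 3 * phiL g0 K eps kappa dt (Lap2N K (\<lambda>a b. u (n + 1) a b - u n a b)) i j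
      - dt * phiL g0 K eps kappa dt (fN K kappa (u n)) i j
      - dt * phiL g1 K eps kappa dt (\<lambda>a b. 3/2 * fN K kappa (u n) a b
            - 2 * fN K kappa (u (n - 1)) a b + 1/2 * fN K kappa (u (n - 2)) a b) i j
      - dt * phiL g2 K eps kappa dt (\<lambda>a b. 1/2 * fN K kappa (u n) a b
            - fN K kappa (u (n - 1)) a b + 1/2 * fN K kappa (u (n - 2)) a b) i j"
  shows "\<forall>k \<ge> 0. EN K eps (u k) \<le> EN K eps (u 0)
      + gamma10 kappa * gradnorm2sq K (\<lambda>a b. u 0 a b - u (-1) a b)
      + gamma30 kappa * gradnorm2sq K (\<lambda>a b. u (-1) a b - u (-2) a b)"
proof -
  have AC: "2 * ((5 + 2 * kappa + gamma10 kappa) - kappa) * ((5 + 2 * kappa + gamma10 kappa) - kappa / 2) ^ 3 \<le> A * eps\<^sup>2"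
    by (rule const_bound[OF assms(1) assms(2) assms(4)])
  define V where "V = (\<lambda>m::int. EN K eps (u m) + gamma10 kappa * gradnorm2sq K (\<lambda>a b. u m a b - u (m - 1) a b)
      + gamma30 kappa * gradnorm2sq K (\<lambda>a b. u (m - 1) a b - u (m - 2) a b))"
  have stepV: "V (n + 1) \<le> V n" if n: "n \<ge> 0" for n :: int
  proof -
    have "EN K eps (u (n + 1)) + gamma10 kappa * gradnorm2sq K (\<lambda>a b. u (n + 1) a b - u n a b)
           + gamma30 kappa * gradnorm2sq K (\<lambda>a b. u n a b - u (n - 1) a b)
         \<le> EN K eps (u n) + gamma10 kappa * gradnorm2sq K (\<lambda>a b. u n a b - u (n - 1) a b)
           + gamma30 kappa * gradnorm2sq K (\<lambda>a b. u (n - 1) a b - u (n - 2) a b)"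
      by (rule step[OF assms(1) assms(2) assms(3) AC]) (rule scheme[OF n], assumption+)
    moreover have "n + 1 - 1 = n" "n + 1 - 2 = n - 1" by simp_all
    ultimately show ?thesis unfolding V_def by simp
  qed
  have Vmono: "V (int m) \<le> V 0" for m :: nat
  proof (induction m)
    case 0 show ?case by simp
  next
    case (Suc m)
    have "V (int (Suc m)) = V (int m + 1)" by (simp add: add.commute)
    also have "\<dots> \<le> V (int m)" by (rule stepV) simp
    also have "\<dots> \<le> V 0" by (rule Suc.IH)
    finally show ?case .
  qed
  have gn0: "0 \<le> gradnorm2sq K f" for f
    unfolding gradnorm2sq_sum by (intro mult_nonneg_nonneg sum_nonneg add_nonneg_nonneg zero_le_power2)
  have C41: "1 \<le> C4" by (rule C4_bounds(1))
  have g10: "0 \<le> gamma10 kappa" using C41 assms(2) by (simp add: gamma10_def)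
  have g30: "0 \<le> gamma30 kappa" using C41 assms(2) by (simp add: gamma30_def)
  show ?thesis
  proof (intro allI impI)
    fix k :: int assume k: "k \<ge> 0"
    then obtain m :: nat where m: "k = int m" by (metis nonneg_eq_int)
    have "EN K eps (u k) \<le> V k"
      unfolding V_def using gn0 g10 g30 by (simp add: add_nonneg_nonneg mult_nonneg_nonneg)
    also have "\<dots> \<le> V 0" using Vmono[of m] m by simp
    also have "V 0 = EN K eps (u 0) + gamma10 kappa * gradnorm2sq K (\<lambda>a b. u 0 a b - u (-1) a b)
      + gamma30 kappa * gradnorm2sq K (\<lambda>a b. u (-1) a b - u (-2) a b)" unfolding V_def by simp
    finally show "EN K eps (u k) \<le> EN K eps (u 0) + gamma10 kappa * gradnorm2sq K (\<lambda>a b. u 0 a b - u (-1) a b)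
      + gamma30 kappa * gradnorm2sq K (\<lambda>a b. u (-1) a b - u (-2) a b)" .
  qed
qed

end
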